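(* Let $E$ be a semi-Montel or Schwartz space, let $\mathcal{FV}(\Omega)$ be a dom-space and let $U$ fix the topology in $\mathcal{FV}(\Omega)$. Then for every $f\in\mathcal{FV}_{E'}(U,E)_{lb}$ the map $\mathscr{R}_f\colon E'\to\mathcal{FV}(\Omega)$, $\mathscr{R}_f(e'):=f_{e'}$, belongs to $L(E'_\gamma,\mathcal{FV}(\Omega))$, and for every $\alpha\in\mathfrak{A}$ the set $\mathscr{R}_f(B_\alpha^\circ)$ is relatively compact in $\mathcal{FV}(\Omega)$, where $B_\alpha:=\{x\in E:p_\alpha(x)<1\}$.
   Context: $\mathbb{K}\in\{\mathbb{R},\mathbb{C}\}$; $E$ is a non-trivial locally convex Hausdorff space over $\mathbb{K}$ with a directed fundamental system of seminorms $(p_\alpha)_{\alpha\in\mathfrak{A}}$; $E'$ its dual, $B_\alpha^\circ$ the polar of $B_\alpha$ in $E'$, and $E'_\gamma$ is $E'$ with the topology of uniform convergence on precompact subsets of $E$. Semi-Montel: bounded sets are relatively compact; Schwartz space in the usual sense. Weighted function spaces: Let $\Omega,J,L$ be non-empty sets, $(M_l)_{l\in L}$ non-empty sets and $\mathcal{V}=((\nu_{j,l,m})_{m\in M_l})_{j\in J,l\in L}$ functions $\nu_{j,l,m}\colon\Omega\to[0,\infty)$ such that for all $x\in\Omega$, $l\in L$ there is $j\in J$ with $\nu_{j,l,m}(x)>0$ for all $m\in M_l$. Let $\mathcal{M}_{\mathrm{top}}:=\bigcup_lM_l$, and $\mathcal{M}_0,\mathcal{M}_r$ sets, the three pairwise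 disjoint, $\mathcal{M}$ their union; $(\omega_m)_{m\in\mathcal{M}}$ non-empty sets with $\Omega\subset\omega_m$ for $m\in\mathcal{M}_{\mathrm{top}}$; $T^{\mathbb{K}}_m\colon\operatorname{dom}T^{\mathbb{K}}_m\subset\mathbb{K}^\Omega\to\mathbb{K}^{\omega_m}$ linear. $\mathcal{FV}(\Omega)$ is the set of $f\in\bigcap_{m\in\mathcal{M}}\operatorname{dom}T^{\mathbb{K}}_m\cap\bigcap_{m\in\mathcal{M}_0}\ker T^{\mathbb{K}}_m$ with $|f|_{j,l}:=\sup_{x\in\Omega,m\in M_l}|T^{\mathbb{K}}_m(f)(x)|\nu_{j,l,m}(x)<\infty$ for all $j,l$, with these seminorms. $T^{\mathbb{K}}_{m,x}(f):=T^{\mathbb{K}}_m(f)(x)$. It is a dom-space if the seminorms are directed and point evaluations $f\mapsto f(x)$ are continuous. $U\subset\bigcup_{m\in\mathcal{M}}\{m\}\times\omega_m$ fixes the topology in $\mathcal{FV}(\Omega)$ if for all $j\in J$, $l\in L$ there are $i\in J$, $k\in L$, $C>0$ with $|f|_{j,l}\le C\sup\{|T^{\mathbb{K}}_m(f)(x)|\nu_{i,k,m}(x): x\in\Omega,\,m\in M_k,\,(m,x)\in U\}$ for all $f\in\mathcal{FV}(\Omega)$. $\mathcal{FV}_{E'}(U,E)$ is the set of $f\colon U\to E$ such that for each $e'\in E'$ there is a (unique) $f_{e'}\in\mathcal{FV}(\Omega)$ with $T^{\mathbb{K}}_m(f_{e'})(x)=e'(f(m,x))$ for all $(m,x)\in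 U$. For $i\in J$, $k\in L$ let $N_{U,i,k}(f):=\{f(m,x)\nu_{i,k,m}(x): x\in\Omega,\,m\in M_k,\,(m,x)\in U\}$, and $\mathcal{FV}_{E'}(U,E)_{lb}$ is the set of $f\in\mathcal{FV}_{E'}(U,E)$ with $N_{U,i,k}(f)$ bounded in $E$ for all $i\in J$, $k\in L$. *)

theory Defs
  imports "HOL-Analysis.Analysis" "HOL-Library.Function_Algebras"
begin

definition seminorm_on :: "('k::real_normed_field \<Rightarrow> 'e::ab_group_add \<Rightarrow> 'e) \<Rightarrow> ('e \<Rightarrow> real) \<Rightarrow> bool" where
  "seminorm_on smul q \<longleftrightarrow>
     (\<forall>x y. q (x + y) \<le> q x + q y) \<and> (\<forall>c x. q (smul c x) = norm c * q x)"

definition seminorm_topology :: "'i set \<Rightarrow> ('i \<Rightarrow> 'v::ab_group_add \<Rightarrow> real) \<Rightarrow> 'v set \<Rightarrow> 'v topology" where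
  "seminorm_topology I q V = topology (\<lambda>S. S \<subseteq> V \<and>
     (\<forall>x\<in>S. \<exists>F \<epsilon>. finite F \<and> F \<subseteq> I \<and> \<epsilon> > 0 \<and> {y\<in>V. \<forall>i\<in>F. q i (y - x) < \<epsilon>} \<subseteq> S))"

definition lcs_seminorms :: "('k::real_normed_field \<Rightarrow> 'e::ab_group_add \<Rightarrow> 'e) \<Rightarrow> 'a set \<Rightarrow> ('a \<Rightarrow> 'e \<Rightarrow> real) \<Rightarrow> bool" where
  "lcs_seminorms smul A p \<longleftrightarrow> A \<noteq> {} \<and> (\<forall>\<alpha>\<in>A. seminorm_on smul (p \<alpha>)) \<and>
     (\<forall>\<alpha>\<in>A. \<forall>\<beta>\<in>A. \<exists>\<gamma>\<in>A. \<exists>C. \<forall>x. max (p \<alpha> x) (p \<beta> x) \<le> C * p \<gamma> x) \<and>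
     (\<forall>x. x \<noteq> 0 \<longrightarrow> (\<exists>\<alpha>\<in>A. p \<alpha> x \<noteq> 0))"

definition Etop :: "'a set \<Rightarrow> ('a \<Rightarrow> 'e::ab_group_add \<Rightarrow> real) \<Rightarrow> 'e topology" where
  "Etop A p = seminorm_topology A p UNIV"

definition dual :: "('k::real_normed_field \<Rightarrow> 'e::ab_group_add \<Rightarrow> 'e) \<Rightarrow> 'a set \<Rightarrow> ('a \<Rightarrow> 'e \<Rightarrow> real) \<Rightarrow> ('e \<Rightarrow> 'k) set" where
  "dual smul A p = {e'. Vector_Spaces.linear smul (*) e' \<and> continuous_map (Etop A p) euclidean e'}"

definition bounded_lcs :: "'a set \<Rightarrow> ('a \<Rightarrow> 'e \<Rightarrow> real) \<Rightarrow> 'e set \<Rightarrow> bool" where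
  "bounded_lcs A p B \<longleftrightarrow> (\<forall>\<alpha>\<in>A. \<exists>C. \<forall>x\<in>B. p \<alpha> x \<le> C)"

definition precompact_wrt :: "('e::ab_group_add \<Rightarrow> real) \<Rightarrow> 'e set \<Rightarrow> bool" where
  "precompact_wrt q K \<longleftrightarrow> (\<forall>\<epsilon>>0. \<exists>F. finite F \<and> K \<subseteq> (\<Union>y\<in>F. {x. q (x - y) < \<epsilon>}))"

definition precompact_lcs :: "'a set \<Rightarrow> ('a \<Rightarrow> 'e::ab_group_add \<Rightarrow> real) \<Rightarrow> 'e set \<Rightarrow> bool" where
  "precompact_lcs A p K \<longleftrightarrow> (\<forall>\<alpha>\<in>A. precompact_wrt (p \<alpha>) K)"

definition relatively_compact :: "'v topology \<Rightarrow> 'v set \<Rightarrow> bool" where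
  "relatively_compact T S \<longleftrightarrow> compactin T (T closure_of S)"

definition semi_Montel :: "'a set \<Rightarrow> ('a \<Rightarrow> 'e::ab_group_add \<Rightarrow> real) \<Rightarrow> bool" where
  "semi_Montel A p \<longleftrightarrow> (\<forall>B. bounded_lcs A p B \<longrightarrow> relatively_compact (Etop A p) B)"

definition Schwartz :: "'a set \<Rightarrow> ('a \<Rightarrow> 'e::ab_group_add \<Rightarrow> real) \<Rightarrow> bool" where
  "Schwartz A p \<longleftrightarrow> (\<forall>\<alpha>\<in>A. \<exists>\<beta>\<in>A. precompact_wrt (p \<alpha>) {x. p \<beta> x < 1})"

definition gamma_top :: "('k::real_normed_field \<Rightarrow> 'e::ab_group_add \<Rightarrow> 'e) \<Rightarrow> 'a set \<Rightarrow> ('a \<Rightarrow> 'e \<Rightarrow> real) \<Rightarrow> ('e \<Rightarrow> 'k) topology" where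
  "gamma_top smul A p = seminorm_topology {K. K \<noteq> {} \<and> precompact_lcs A p K}
      (\<lambda>K g. Sup ((\<lambda>x. norm (g x)) ` K)) (dual smul A p)"

definition polar_ball :: "('k::real_normed_field \<Rightarrow> 'e::ab_group_add \<Rightarrow> 'e) \<Rightarrow> 'a set \<Rightarrow> ('a \<Rightarrow> 'e \<Rightarrow> real) \<Rightarrow> 'a \<Rightarrow> ('e \<Rightarrow> 'k) set" where
  "polar_ball smul A p \<alpha> = {e' \<in> dual smul A p. \<forall>x. p \<alpha> x < 1 \<longrightarrow> norm (e' x) \<le> 1}"

definition wsup :: "real set \<Rightarrow> real" where
  "wsup S = Sup (insert 0 S)"

text \<open>Functions in K^Omega are represented as functions 'x => 'k vanishing outside Omega;
  functions in K^(omega_m) as functions vanishing outside omega_m. Mtop = (UN l:L. M l).\<close>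
definition FV_data :: "'x set \<Rightarrow> 'j set \<Rightarrow> 'l set \<Rightarrow> ('l \<Rightarrow> 'm set) \<Rightarrow> ('j \<Rightarrow> 'l \<Rightarrow> 'm \<Rightarrow> 'x \<Rightarrow> real)
   \<Rightarrow> 'm set \<Rightarrow> 'm set \<Rightarrow> ('m \<Rightarrow> 'x set) \<Rightarrow> ('m \<Rightarrow> ('x \<Rightarrow> 'k::real_normed_field) set)
   \<Rightarrow> ('m \<Rightarrow> ('x \<Rightarrow> 'k) \<Rightarrow> 'x \<Rightarrow> 'k) \<Rightarrow> bool" where
  "FV_data \<Omega> J L M \<nu> M0 Mr \<omega> domT T \<longleftrightarrow>
     \<Omega> \<noteq> {} \<and> J \<noteq> {} \<and> L \<noteq> {} \<and> (\<forall>l\<in>L. M l \<noteq> {}) \<and>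
     (\<forall>j\<in>J. \<forall>l\<in>L. \<forall>m\<in>M l. \<forall>x\<in>\<Omega>. \<nu> j l m x \<ge> 0) \<and>
     (\<forall>x\<in>\<Omega>. \<forall>l\<in>L. \<exists>j\<in>J. \<forall>m\<in>M l. \<nu> j l m x > 0) \<and>
     (\<Union>l\<in>L. M l) \<inter> M0 = {} \<and> (\<Union>l\<in>L. M l) \<inter> Mr = {} \<and> M0 \<inter> Mr = {} \<and>
     (\<forall>m\<in>(\<Union>l\<in>L. M l) \<union> M0 \<union> Mr. \<omega> m \<noteq> {}) \<and>
     (\<forall>m\<in>(\<Union>l\<in>L. M l). \<Omega> \<subseteq> \<omega> m) \<and>
     (\<forall>m\<in>(\<Union>l\<in>L. M l) \<union> M0 \<union> Mr.
        domT m \<subseteq> {f. \<forall>x. x \<notin> \<Omega> \<longrightarrow> f x = 0} \<and>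
        (\<lambda>x. 0) \<in> domT m \<and>
        (\<forall>f\<in>domT m. \<forall>g\<in>domT m. (\<lambda>x. f x + g x) \<in> domT m \<and>
            T m (\<lambda>x. f x + g x) = (\<lambda>x. T m f x + T m g x)) \<and>
        (\<forall>f\<in>domT m. \<forall>c. (\<lambda>x. c * f x) \<in> domT m \<and> T m (\<lambda>x. c * f x) = (\<lambda>x. c * T m f x)) \<and>
        (\<forall>f\<in>domT m. \<forall>x. x \<notin> \<omega> m \<longrightarrow> T m f x = 0))"

definition FVsn :: "'x set \<Rightarrow> ('l \<Rightarrow> 'm set) \<Rightarrow> ('j \<Rightarrow> 'l \<Rightarrow> 'm \<Rightarrow> 'x \<Rightarrow> real)
   \<Rightarrow> ('m \<Rightarrow> ('x \<Rightarrow> 'k::real_normed_field) \<Rightarrow> 'x \<Rightarrow> 'k) \<Rightarrow> 'j \<Rightarrow> 'l \<Rightarrow> ('x \<Rightarrow> 'k) \<Rightarrow> real" where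
  "FVsn \<Omega> M \<nu> T j l f = wsup {norm (T m f x) * \<nu> j l m x | x m. x \<in> \<Omega> \<and> m \<in> M l}"

definition FVspace :: "'x set \<Rightarrow> 'j set \<Rightarrow> 'l set \<Rightarrow> ('l \<Rightarrow> 'm set) \<Rightarrow> ('j \<Rightarrow> 'l \<Rightarrow> 'm \<Rightarrow> 'x \<Rightarrow> real)
   \<Rightarrow> 'm set \<Rightarrow> 'm set \<Rightarrow> ('m \<Rightarrow> 'x set) \<Rightarrow> ('m \<Rightarrow> ('x \<Rightarrow> 'k::real_normed_field) set)
   \<Rightarrow> ('m \<Rightarrow> ('x \<Rightarrow> 'k) \<Rightarrow> 'x \<Rightarrow> 'k) \<Rightarrow> ('x \<Rightarrow> 'k) set" where
  "FVspace \<Omega> J L M \<nu> M0 Mr \<omega> domT T = {f.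
     (\<forall>m\<in>(\<Union>l\<in>L. M l) \<union> M0 \<union> Mr. f \<in> domT m) \<and>
     (\<forall>m\<in>M0. \<forall>x\<in>\<omega> m. T m f x = 0) \<and>
     (\<forall>j\<in>J. \<forall>l\<in>L. bdd_above {norm (T m f x) * \<nu> j l m x | x m. x \<in> \<Omega> \<and> m \<in> M l})}"

definition FVtop :: "'x set \<Rightarrow> 'j set \<Rightarrow> 'l set \<Rightarrow> ('l \<Rightarrow> 'm set) \<Rightarrow> ('j \<Rightarrow> 'l \<Rightarrow> 'm \<Rightarrow> 'x \<Rightarrow> real)
   \<Rightarrow> 'm set \<Rightarrow> 'm set \<Rightarrow> ('m \<Rightarrow> 'x set) \<Rightarrow> ('m \<Rightarrow> ('x \<Rightarrow> 'k::real_normed_field) set)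
   \<Rightarrow> ('m \<Rightarrow> ('x \<Rightarrow> 'k) \<Rightarrow> 'x \<Rightarrow> 'k) \<Rightarrow> ('x \<Rightarrow> 'k) topology" where
  "FVtop \<Omega> J L M \<nu> M0 Mr \<omega> domT T =
     seminorm_topology (J \<times> L) (\<lambda>(j, l). FVsn \<Omega> M \<nu> T j l) (FVspace \<Omega> J L M \<nu> M0 Mr \<omega> domT T)"

definition dom_space :: "'x set \<Rightarrow> 'j set \<Rightarrow> 'l set \<Rightarrow> ('l \<Rightarrow> 'm set) \<Rightarrow> ('j \<Rightarrow> 'l \<Rightarrow> 'm \<Rightarrow> 'x \<Rightarrow> real)
   \<Rightarrow> 'm set \<Rightarrow> 'm set \<Rightarrow> ('m \<Rightarrow> 'x set) \<Rightarrow> ('m \<Rightarrow> ('x \<Rightarrow> 'k::real_normed_field) set)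
   \<Rightarrow> ('m \<Rightarrow> ('x \<Rightarrow> 'k) \<Rightarrow> 'x \<Rightarrow> 'k) \<Rightarrow> bool" where
  "dom_space \<Omega> J L M \<nu> M0 Mr \<omega> domT T \<longleftrightarrow>
     (\<forall>j1\<in>J. \<forall>l1\<in>L. \<forall>j2\<in>J. \<forall>l2\<in>L. \<exists>j3\<in>J. \<exists>l3\<in>L. \<exists>C.
        \<forall>f\<in>FVspace \<Omega> J L M \<nu> M0 Mr \<omega> domT T.
          max (FVsn \<Omega> M \<nu> T j1 l1 f) (FVsn \<Omega> M \<nu> T j2 l2 f) \<le> C * FVsn \<Omega> M \<nu> T j3 l3 f) \<and>
     (\<forall>x\<in>\<Omega>. continuous_map (FVtop \<Omega> J L M \<nu> M0 Mr \<omega> domT T) euclidean (\<lambda>f. f x))"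

definition fixes_topology :: "'x set \<Rightarrow> 'j set \<Rightarrow> 'l set \<Rightarrow> ('l \<Rightarrow> 'm set) \<Rightarrow> ('j \<Rightarrow> 'l \<Rightarrow> 'm \<Rightarrow> 'x \<Rightarrow> real)
   \<Rightarrow> 'm set \<Rightarrow> 'm set \<Rightarrow> ('m \<Rightarrow> 'x set) \<Rightarrow> ('m \<Rightarrow> ('x \<Rightarrow> 'k::real_normed_field) set)
   \<Rightarrow> ('m \<Rightarrow> ('x \<Rightarrow> 'k) \<Rightarrow> 'x \<Rightarrow> 'k) \<Rightarrow> ('m \<times> 'x) set \<Rightarrow> bool" where
  "fixes_topology \<Omega> J L M \<nu> M0 Mr \<omega> domT T U \<longleftrightarrow>
     U \<subseteq> {(m, x). m \<in> (\<Union>l\<in>L. M l) \<union> M0 \<union> Mr \<and> x \<in> \<omega> m} \<and>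
     (\<forall>j\<in>J. \<forall>l\<in>L. \<exists>i\<in>J. \<exists>k\<in>L. \<exists>C>0. \<forall>f\<in>FVspace \<Omega> J L M \<nu> M0 Mr \<omega> domT T.
        FVsn \<Omega> M \<nu> T j l f \<le>
          C * wsup {norm (T m f x) * \<nu> i k m x | x m. x \<in> \<Omega> \<and> m \<in> M k \<and> (m, x) \<in> U})"

definition FVE_lb :: "('k::real_normed_field \<Rightarrow> 'e::ab_group_add \<Rightarrow> 'e) \<Rightarrow> 'a set \<Rightarrow> ('a \<Rightarrow> 'e \<Rightarrow> real)
   \<Rightarrow> 'x set \<Rightarrow> 'j set \<Rightarrow> 'l set \<Rightarrow> ('l \<Rightarrow> 'm set) \<Rightarrow> ('j \<Rightarrow> 'l \<Rightarrow> 'm \<Rightarrow> 'x \<Rightarrow> real)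
   \<Rightarrow> 'm set \<Rightarrow> 'm set \<Rightarrow> ('m \<Rightarrow> 'x set) \<Rightarrow> ('m \<Rightarrow> ('x \<Rightarrow> 'k) set)
   \<Rightarrow> ('m \<Rightarrow> ('x \<Rightarrow> 'k) \<Rightarrow> 'x \<Rightarrow> 'k) \<Rightarrow> ('m \<times> 'x) set \<Rightarrow> ('m \<times> 'x \<Rightarrow> 'e) set" where
  "FVE_lb smul A p \<Omega> J L M \<nu> M0 Mr \<omega> domT T U = {f.
     (\<forall>e'\<in>dual smul A p. \<exists>g\<in>FVspace \<Omega> J L M \<nu> M0 Mr \<omega> domT T.
         \<forall>(m, x)\<in>U. T m g x = e' (f (m, x))) \<and>
     (\<forall>i\<in>J. \<forall>k\<in>L. bounded_lcs A p
         {smul (of_real (\<nu> i k m x)) (f (m, x)) | x m. x \<in> \<Omega> \<and> m \<in> M k \<and> (m, x) \<in> U})}"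

definition Rmap :: "'x set \<Rightarrow> 'j set \<Rightarrow> 'l set \<Rightarrow> ('l \<Rightarrow> 'm set) \<Rightarrow> ('j \<Rightarrow> 'l \<Rightarrow> 'm \<Rightarrow> 'x \<Rightarrow> real)
   \<Rightarrow> 'm set \<Rightarrow> 'm set \<Rightarrow> ('m \<Rightarrow> 'x set) \<Rightarrow> ('m \<Rightarrow> ('x \<Rightarrow> 'k::real_normed_field) set)
   \<Rightarrow> ('m \<Rightarrow> ('x \<Rightarrow> 'k) \<Rightarrow> 'x \<Rightarrow> 'k) \<Rightarrow> ('m \<times> 'x) set \<Rightarrow> ('m \<times> 'x \<Rightarrow> 'e) \<Rightarrow> ('e \<Rightarrow> 'k) \<Rightarrow> ('x \<Rightarrow> 'k)" where
  "Rmap \<Omega> J L M \<nu> M0 Mr \<omega> domT T U f e' =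
     (THE g. g \<in> FVspace \<Omega> J L M \<nu> M0 Mr \<omega> domT T \<and> (\<forall>(m, x)\<in>U. T m g x = e' (f (m, x))))"

end

theory Submission
  imports Defs
begin


lemma seminorm_topology_istopology:
  fixes q :: "'i \<Rightarrow> 'v::ab_group_add \<Rightarrow> real"
  shows "istopology (\<lambda>S. S \<subseteq> V \<and>
     (\<forall>x\<in>S. \<exists>F \<epsilon>. finite F \<and> F \<subseteq> I \<and> \<epsilon> > 0 \<and> {y\<in>V. \<forall>i\<in>F. q i (y - x) < \<epsilon>} \<subseteq> S))"
  unfolding istopology_def
proof (rule conjI; intro allI impI)
  fix S T
  assume a: "S \<subseteq> V \<and> (\<forall>x\<in>S. \<exists>F \<epsilon>. finite F \<and> F \<subseteq> I \<and> \<epsilon> > 0 \<and> {y\<in>V. \<forall>i\<in>F. q i (y - x) < \<epsilon>} \<subseteq> S)"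
     and b: "T \<subseteq> V \<and> (\<forall>x\<in>T. \<exists>F \<epsilon>. finite F \<and> F \<subseteq> I \<and> \<epsilon> > 0 \<and> {y\<in>V. \<forall>i\<in>F. q i (y - x) < \<epsilon>} \<subseteq> T)"
  show "S \<inter> T \<subseteq> V \<and> (\<forall>x\<in>S \<inter> T. \<exists>F \<epsilon>. finite F \<and> F \<subseteq> I \<and> \<epsilon> > 0 \<and> {y\<in>V. \<forall>i\<in>F. q i (y - x) < \<epsilon>} \<subseteq> S \<inter> T)"
  proof (intro conjI ballI)
    show "S \<inter> T \<subseteq> V" using a by auto
    fix x assume x: "x \<in> S \<inter> T"
    obtain F1 e1 where 1: "finite F1" "F1 \<subseteq> I" "e1 > 0" "{y\<in>V. \<forall>i\<in>F1. q i (y - x) < e1} \<subseteq> S" using a x by blast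
    obtain F2 e2 where 2: "finite F2" "F2 \<subseteq> I" "e2 > 0" "{y\<in>V. \<forall>i\<in>F2. q i (y - x) < e2} \<subseteq> T" using b x by blast
    show "\<exists>F \<epsilon>. finite F \<and> F \<subseteq> I \<and> \<epsilon> > 0 \<and> {y\<in>V. \<forall>i\<in>F. q i (y - x) < \<epsilon>} \<subseteq> S \<inter> T"
    proof (intro exI[of _ "F1 \<union> F2"] exI[of _ "min e1 e2"] conjI)
      show "finite (F1 \<union> F2)" "F1 \<union> F2 \<subseteq> I" "min e1 e2 > 0" using 1 2 by auto
      show "{y\<in>V. \<forall>i\<in>F1 \<union> F2. q i (y - x) < min e1 e2} \<subseteq> S \<inter> T"
      proof
        fix y assume y: "y \<in> {y\<in>V. \<forall>i\<in>F1 \<union> F2. q i (y - x) < min e1 e2}"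
        then have "y \<in> {y\<in>V. \<forall>i\<in>F1. q i (y - x) < e1}" "y \<in> {y\<in>V. \<forall>i\<in>F2. q i (y - x) < e2}" by auto
        then show "y \<in> S \<inter> T" using 1(4) 2(4) by blast
      qed
    qed
  qed
next
  fix K :: "'v set set"
  assume K: "\<forall>S\<in>K. S \<subseteq> V \<and> (\<forall>x\<in>S. \<exists>F \<epsilon>. finite F \<and> F \<subseteq> I \<and> \<epsilon> > 0 \<and> {y\<in>V. \<forall>i\<in>F. q i (y - x) < \<epsilon>} \<subseteq> S)"
  then show "\<Union>K \<subseteq> V \<and> (\<forall>x\<in>\<Union>K. \<exists>F \<epsilon>. finite F \<and> F \<subseteq> I \<and> \<epsilon> > 0 \<and> {y\<in>V. \<forall>i\<in>F. q i (y - x) < \<epsilon>} \<subseteq> \<Union>K)"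
  proof (intro conjI ballI)
    show "\<Union>K \<subseteq> V" using K by blast
    fix x assume "x \<in> \<Union>K"
    then obtain S where S: "S \<in> K" "x \<in> S" by blast
    have "\<forall>x\<in>S. \<exists>F \<epsilon>. finite F \<and> F \<subseteq> I \<and> \<epsilon> > 0 \<and> {y\<in>V. \<forall>i\<in>F. q i (y - x) < \<epsilon>} \<subseteq> S"
      using bspec[OF K S(1)] by (rule conjunct2)
    from bspec[OF this S(2)] obtain F \<epsilon> where H: "finite F" "F \<subseteq> I" "\<epsilon> > 0" "{y\<in>V. \<forall>i\<in>F. q i (y - x) < \<epsilon>} \<subseteq> S"
      by (elim exE conjE)
    have "{y\<in>V. \<forall>i\<in>F. q i (y - x) < \<epsilon>} \<subseteq> \<Union>K" using H(4) Union_upper[OF S(1)] by (rule subset_trans)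
    then show "\<exists>F \<epsilon>. finite F \<and> F \<subseteq> I \<and> \<epsilon> > 0 \<and> {y\<in>V. \<forall>i\<in>F. q i (y - x) < \<epsilon>} \<subseteq> \<Union>K"
      using H by blast
  qed
qed

lemma openin_seminorm_topology:
  "openin (seminorm_topology I q V) S \<longleftrightarrow> S \<subseteq> V \<and>
     (\<forall>x\<in>S. \<exists>F \<epsilon>. finite F \<and> F \<subseteq> I \<and> \<epsilon> > 0 \<and> {y\<in>V. \<forall>i\<in>F. q i (y - x) < \<epsilon>} \<subseteq> S)"
  unfolding seminorm_topology_def
  by (subst topology_inverse'[OF seminorm_topology_istopology]) (rule refl)

lemma topspace_seminorm_topology [simp]: "topspace (seminorm_topology I q V) = V"
proof -
  have "openin (seminorm_topology I q V) V"
    unfolding openin_seminorm_topology by (intro conjI ballI exI[of _ "{}"] exI[of _ "1::real"]) auto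
  then have "V \<subseteq> topspace (seminorm_topology I q V)" by (simp add: openin_subset)
  moreover have "topspace (seminorm_topology I q V) \<subseteq> V"
    using openin_topspace[of "seminorm_topology I q V"] unfolding openin_seminorm_topology by blast
  ultimately show ?thesis by blast
qed

lemma seminorm_ball_open:
  fixes q :: "'i \<Rightarrow> 'v::ab_group_add \<Rightarrow> real"
  assumes tri: "\<And>a b c. a \<in> V \<Longrightarrow> b \<in> V \<Longrightarrow> c \<in> V \<Longrightarrow> q i (a - c) \<le> q i (a - b) + q i (b - c)"
    and "i \<in> I" "x \<in> V"
  shows "openin (seminorm_topology I q V) {y\<in>V. q i (y - x) < \<epsilon>}"
  unfolding openin_seminorm_topology
proof (intro conjI ballI)
  fix y assume y: "y \<in> {y\<in>V. q i (y - x) < \<epsilon>}"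
  show "\<exists>F \<epsilon>'. finite F \<and> F \<subseteq> I \<and> \<epsilon>' > 0 \<and> {z\<in>V. \<forall>i\<in>F. q i (z - y) < \<epsilon>'} \<subseteq> {y\<in>V. q i (y - x) < \<epsilon>}"
  proof (intro exI[of _ "{i}"] exI[of _ "\<epsilon> - q i (y - x)"] conjI)
    show "finite {i}" "{i} \<subseteq> I" using assms by auto
    show "\<epsilon> - q i (y - x) > 0" using y by auto
    show "{z\<in>V. \<forall>j\<in>{i}. q j (z - y) < \<epsilon> - q i (y - x)} \<subseteq> {y\<in>V. q i (y - x) < \<epsilon>}"
    proof (rule subsetI)
      fix z assume z: "z \<in> {z\<in>V. \<forall>j\<in>{i}. q j (z - y) < \<epsilon> - q i (y - x)}"
      have "q i (z - x) \<le> q i (z - y) + q i (y - x)" using tri[of z y x] z y assms by blast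
      then show "z \<in> {y\<in>V. q i (y - x) < \<epsilon>}" using z by auto
    qed
  qed
qed auto

lemma openin_finite_Inter_top:
  assumes "finite F" "\<And>y. y \<in> F \<Longrightarrow> openin X (S y)"
  shows "openin X (topspace X \<inter> \<Inter>(S ` F))"
  using assms
proof (induction F rule: finite_induct)
  case empty then show ?case by simp
next
  case (insert a F)
  have "topspace X \<inter> \<Inter>(S ` insert a F) = (topspace X \<inter> \<Inter>(S ` F)) \<inter> S a" by auto
  then show ?case using insert by (auto intro!: openin_Int)
qed

lemma continuous_map_into_seminorm_topology:
  assumes img: "f ` topspace X \<subseteq> V"
    and loc: "\<And>x0 i \<epsilon>. x0 \<in> topspace X \<Longrightarrow> i \<in> I \<Longrightarrow> \<epsilon> > 0 \<Longrightarrow>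
               \<exists>W. openin X W \<and> x0 \<in> W \<and> (\<forall>x\<in>W. q i (f x - f x0) < \<epsilon>)"
  shows "continuous_map X (seminorm_topology I q V) f"
  unfolding continuous_map_def
proof (intro conjI allI impI)
  show "f \<in> topspace X \<rightarrow> topspace (seminorm_topology I q V)" using img by auto
  fix S assume S: "openin (seminorm_topology I q V) S"
  show "openin X {x \<in> topspace X. f x \<in> S}"
    unfolding openin_subopen[of X "{x \<in> topspace X. f x \<in> S}"]
  proof
    fix x0 assume x0: "x0 \<in> {x \<in> topspace X. f x \<in> S}"
    then obtain F \<epsilon> where F: "finite F" "F \<subseteq> I" "\<epsilon> > 0" "{y\<in>V. \<forall>i\<in>F. q i (y - f x0) < \<epsilon>} \<subseteq> S"
      using S unfolding openin_seminorm_topology by blast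
    have "\<forall>i\<in>F. \<exists>W. openin X W \<and> x0 \<in> W \<and> (\<forall>x\<in>W. q i (f x - f x0) < \<epsilon>)"
      using loc x0 F by blast
    then obtain W where W: "\<And>i. i \<in> F \<Longrightarrow> openin X (W i) \<and> x0 \<in> W i \<and> (\<forall>x\<in>W i. q i (f x - f x0) < \<epsilon>)"
      by metis
    let ?T = "topspace X \<inter> \<Inter>(W ` F)"
    have "openin X ?T" using W F by (intro openin_finite_Inter_top) auto
    moreover have "x0 \<in> ?T" using W x0 by auto
    moreover have "?T \<subseteq> {x \<in> topspace X. f x \<in> S}"
    proof
      fix x assume x: "x \<in> ?T"
      then have "f x \<in> V" using img by auto
      then show "x \<in> {x \<in> topspace X. f x \<in> S}" using x W F by auto
    qed
    ultimately show "\<exists>T. openin X T \<and> x0 \<in> T \<and> T \<subseteq> {x \<in> topspace X. f x \<in> S}" by blast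
  qed
qed



lemma complete_span_finite:
  fixes Y :: "'a::real_normed_vector set"
  assumes "finite Y"
  shows "complete (span Y)"
  using assms
proof (induction Y rule: finite_induct)
  case empty
  show ?case by (simp add: compact_imp_complete)
next
  case (insert b Y)
  show ?case
  proof (cases "b \<in> span Y")
    case True
    then show ?thesis using insert by (simp add: span_redundant)
  next
    case False
    let ?S = "span Y"
    have clS: "closed ?S" using insert.IH by (rule complete_imp_closed)
    define d where "d = infdist b ?S"
    have dpos: "d > 0" unfolding d_def
      using infdist_pos_not_in_closed[OF clS] False span_zero by blast
    have key: "\<bar>t\<bar> * d \<le> norm (t *\<^sub>R b + s)" if s: "s \<in> ?S" for t s
    proof (cases "t = 0")
      case True then show ?thesis by simp
    next
      case False
      have ms: "- ((1/t) *\<^sub>R s) \<in> ?S" using s by (simp add: span_neg span_scale)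
      have "d \<le> dist b (- ((1/t) *\<^sub>R s))" unfolding d_def by (rule infdist_le[OF ms])
      also have "\<dots> = norm (b + (1/t) *\<^sub>R s)" by (simp add: dist_norm)
      finally have "\<bar>t\<bar> * d \<le> \<bar>t\<bar> * norm (b + (1/t) *\<^sub>R s)"
        by (simp add: mult_left_mono)
      also have "\<dots> = norm (t *\<^sub>R (b + (1/t) *\<^sub>R s))" by simp
      also have "t *\<^sub>R (b + (1/t) *\<^sub>R s) = t *\<^sub>R b + s" using False by (simp add: algebra_simps)
      finally show ?thesis .
    qed
    show ?thesis
    proof (rule completeI)
      fix z :: "nat \<Rightarrow> 'a"
      assume zin: "\<forall>n. z n \<in> span (insert b Y)" and cz: "Cauchy z"
      have "\<forall>n. \<exists>k. z n - k *\<^sub>R b \<in> ?S" using zin by (simp add: span_breakdown_eq)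
      then obtain t where t: "\<And>n. z n - t n *\<^sub>R b \<in> ?S" by metis
      define s where "s n = z n - t n *\<^sub>R b" for n
      have sS: "s n \<in> ?S" for n using t by (simp add: s_def)
      have "Cauchy t"
      proof (rule CauchyI)
        fix e :: real assume e: "e > 0"
        obtain M where M: "\<And>m n. m \<ge> M \<Longrightarrow> n \<ge> M \<Longrightarrow> norm (z m - z n) < e * d"
          using CauchyD[OF cz, of "e * d"] e dpos by auto
        have "norm (t m - t n) < e" if "m \<ge> M" "n \<ge> M" for m n
        proof -
          have "s m - s n \<in> ?S" using sS by (simp add: span_diff)
          then have "\<bar>t m - t n\<bar> * d \<le> norm ((t m - t n) *\<^sub>R b + (s m - s n))" by (rule key)
          also have "(t m - t n) *\<^sub>R b + (s m - s n) = z m - z n"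
            by (simp add: s_def algebra_simps)
          finally have "\<bar>t m - t n\<bar> * d < e * d" using M[OF that] by simp
          then show ?thesis using dpos by simp
        qed
        then show "\<exists>M. \<forall>m\<ge>M. \<forall>n\<ge>M. norm (t m - t n) < e" by blast
      qed
      then obtain T where tT: "t \<longlonglongrightarrow> T" using Cauchy_convergent_iff convergent_def by blast
      have tbT: "(\<lambda>n. t n *\<^sub>R b) \<longlonglongrightarrow> T *\<^sub>R b" by (intro tendsto_intros tT)
      have "Cauchy (\<lambda>n. t n *\<^sub>R b)" using tbT by (rule LIMSEQ_imp_Cauchy)
      have "Cauchy s"
      proof (rule CauchyI)
        fix e :: real assume e: "e > 0"
        obtain M1 where M1: "\<And>m n. m \<ge> M1 \<Longrightarrow> n \<ge> M1 \<Longrightarrow> norm (z m - z n) < e/2"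
          using CauchyD[OF cz, of "e/2"] e by auto
        obtain M2 where M2: "\<And>m n. m \<ge> M2 \<Longrightarrow> n \<ge> M2 \<Longrightarrow> norm (t m *\<^sub>R b - t n *\<^sub>R b) < e/2"
          using CauchyD[OF \<open>Cauchy (\<lambda>n. t n *\<^sub>R b)\<close>, of "e/2"] e by auto
        have "norm (s m - s n) < e" if "m \<ge> max M1 M2" "n \<ge> max M1 M2" for m n
        proof -
          have "s m - s n = (z m - z n) - (t m *\<^sub>R b - t n *\<^sub>R b)" by (simp add: s_def algebra_simps)
          then have "norm (s m - s n) \<le> norm (z m - z n) + norm (t m *\<^sub>R b - t n *\<^sub>R b)"
            by (metis norm_triangle_ineq4)
          then show ?thesis using M1[of m n] M2[of m n] that by simp
        qed
        then show "\<exists>M. \<forall>m\<ge>M. \<forall>n\<ge>M. norm (s m - s n) < e" by blast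
      qed
      then obtain \<sigma> where \<sigma>: "\<sigma> \<in> ?S" "s \<longlonglongrightarrow> \<sigma>"
        using insert.IH sS completeE by metis
      have "(\<lambda>n. s n + t n *\<^sub>R b) \<longlonglongrightarrow> \<sigma> + T *\<^sub>R b" by (intro tendsto_add \<sigma>(2) tbT)
      moreover have "(\<lambda>n. s n + t n *\<^sub>R b) = z" by (simp add: s_def)
      moreover have "\<sigma> + T *\<^sub>R b \<in> span (insert b Y)"
        using \<sigma>(1) by (simp add: span_breakdown_eq exI[of _ T])
      ultimately show "\<exists>l\<in>span (insert b Y). z \<longlonglongrightarrow> l" by auto
    qed
  qed
qed

lemma totally_bounded_field_compact:
  fixes dummy :: "'k::real_normed_vector"
  assumes tb: "\<And>r \<epsilon>. \<epsilon> > 0 \<Longrightarrow> \<exists>F. finite F \<and> cball (0::'k) r \<subseteq> (\<Union>c\<in>F. ball c \<epsilon>)"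
  shows "compact (cball (0::'k) r)"
proof -
  have "\<exists>F. finite F \<and> cball (0::'k) 1 \<subseteq> (\<Union>c\<in>F. ball c (1/2))" by (rule tb) simp
  then obtain Y where Y: "finite Y" "cball (0::'k) 1 \<subseteq> (\<Union>c\<in>Y. ball c (1/2))"
    by (elim exE conjE)
  let ?S = "span Y"
  have cS: "complete ?S" using complete_span_finite[OF Y(1)] .
  have clS: "closed ?S" using complete_imp_closed[OF cS] .
  have allS: "x \<in> ?S" for x
  proof (rule ccontr)
    assume x: "x \<notin> ?S"
    define d where "d = infdist x ?S"
    have ne: "?S \<noteq> {}" using span_zero by blast
    have dpos: "d > 0" unfolding d_def by (rule infdist_pos_not_in_closed[OF clS ne x])
    have "infdist x ?S = (INF a\<in>?S. dist x a)" using ne by (rule infdist_notempty)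
    then have "(INF a\<in>?S. dist x a) = d" unfolding d_def by simp
    then have "(INF a\<in>?S. dist x a) < 2 * d" using dpos by simp
    then obtain s where s: "s \<in> ?S" "dist x s < 2 * d"
    proof -
      have bb: "bdd_below (dist x ` ?S)" by (rule bdd_belowI2[of _ 0]) simp
      show ?thesis using cINF_less_iff[OF ne bb, of "2 * d"] \<open>(INF a\<in>?S. dist x a) < 2 * d\<close> that by blast
    qed
    define n where "n = norm (x - s)"
    have npos: "n > 0" unfolding n_def using x s by auto
    have n2: "n < 2 * d" using s by (simp add: n_def dist_norm)
    define w where "w = (1/n) *\<^sub>R (x - s)"
    have "norm w = 1" using npos by (simp add: w_def n_def)
    then have "w \<in> cball 0 1" by simp
    then have "w \<in> (\<Union>c\<in>Y. ball c (1/2))" using Y(2) by (rule subsetD[rotated])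
    then obtain y where y: "y \<in> Y" "dist y w < 1/2" by auto
    have yS: "s + n *\<^sub>R y \<in> ?S" using s y by (simp add: span_add span_scale span_base)
    have "x - (s + n *\<^sub>R y) = n *\<^sub>R (w - y)" using npos by (simp add: w_def algebra_simps)
    then have "dist x (s + n *\<^sub>R y) = n * norm (w - y)" using npos by (simp add: dist_norm)
    also have "norm (w - y) = dist y w" by (simp add: dist_norm norm_minus_commute)
    finally have "dist x (s + n *\<^sub>R y) < n * (1/2)" using y npos by simp
    also have "\<dots> < d" using n2 by simp
    finally have "dist x (s + n *\<^sub>R y) < d" .
    moreover have "d \<le> dist x (s + n *\<^sub>R y)" unfolding d_def by (rule infdist_le[OF yS])
    ultimately show False by simp
  qed
  then have "?S = UNIV" by auto
  then have "complete (UNIV :: 'k set)" using cS by simp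
  then have "complete (cball (0::'k) r)" by (intro complete_closed_subset[OF closed_cball]) auto
  moreover have "\<forall>e>0. \<exists>k. finite k \<and> cball (0::'k) r \<subseteq> (\<Union>x\<in>k. ball x e)"
  proof (intro allI impI)
    fix e :: real assume e: "e > 0"
    show "\<exists>k. finite k \<and> cball (0::'k) r \<subseteq> (\<Union>x\<in>k. ball x e)" using tb[of e r, OF e] .
  qed
  ultimately show ?thesis unfolding compact_eq_totally_bounded by (rule conjI)
qed



lemma module_mult_field: "module ((*) :: 'k::field \<Rightarrow> 'k \<Rightarrow> 'k)"
  by standard (simp_all add: algebra_simps)

locale lcsE = vector_space smul
  for smul :: "'k::real_normed_field \<Rightarrow> 'e::ab_group_add \<Rightarrow> 'e" +
  fixes A :: "'a set" and p :: "'a \<Rightarrow> 'e \<Rightarrow> real"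
  assumes lcs: "lcs_seminorms smul A p"
begin

lemma A_ne: "A \<noteq> {}" using lcs unfolding lcs_seminorms_def by auto

lemma p_tri: "\<alpha> \<in> A \<Longrightarrow> p \<alpha> (x + y) \<le> p \<alpha> x + p \<alpha> y"
  using lcs unfolding lcs_seminorms_def seminorm_on_def by auto

lemma p_smul: "\<alpha> \<in> A \<Longrightarrow> p \<alpha> (smul c x) = norm c * p \<alpha> x"
  using lcs unfolding lcs_seminorms_def seminorm_on_def by auto

lemma p_zero: "\<alpha> \<in> A \<Longrightarrow> p \<alpha> 0 = 0"
  using p_smul[of \<alpha> 0 0] by simp

lemma p_neg: "\<alpha> \<in> A \<Longrightarrow> p \<alpha> (- x) = p \<alpha> x"
  using p_smul[of \<alpha> "-1" x] by (simp add: scale_minus_left)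

lemma p_nonneg: "\<alpha> \<in> A \<Longrightarrow> 0 \<le> p \<alpha> x"
  using p_tri[of \<alpha> x "-x"] p_neg[of \<alpha> x] p_zero[of \<alpha>] by simp

lemma p_diff_tri: "\<alpha> \<in> A \<Longrightarrow> p \<alpha> (a - c) \<le> p \<alpha> (a - b) + p \<alpha> (b - c)"
  using p_tri[of \<alpha> "a - b" "b - c"] by simp

lemma p_diff_sym: "\<alpha> \<in> A \<Longrightarrow> p \<alpha> (a - b) = p \<alpha> (b - a)"
  using p_neg[of \<alpha> "a - b"] by simp

lemma p_smul_diff: "\<alpha> \<in> A \<Longrightarrow> p \<alpha> (smul c x - smul d x) = norm (c - d) * p \<alpha> x"
  by (simp add: p_smul scale_left_diff_distrib[symmetric])

lemma topspace_Etop [simp]: "topspace (Etop A p) = UNIV"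
  by (simp add: Etop_def)

lemma Etop_ball_open: "\<alpha> \<in> A \<Longrightarrow> openin (Etop A p) {y. p \<alpha> (y - x) < \<epsilon>}"
  using seminorm_ball_open[of UNIV p \<alpha> A x \<epsilon>] p_diff_tri unfolding Etop_def by auto

lemma dual_hom: "e \<in> dual smul A p \<Longrightarrow> module_hom smul (*) e"
  unfolding dual_def by (auto simp: module_hom_iff_linear)

lemma dual_add: "e \<in> dual smul A p \<Longrightarrow> e (x + y) = e x + e y"
  using dual_hom module_hom.add by blast

lemma dual_scale: "e \<in> dual smul A p \<Longrightarrow> e (smul c x) = c * e x"
  using dual_hom module_hom.scale by blast

lemma dual_zero: "e \<in> dual smul A p \<Longrightarrow> e 0 = 0"
  using dual_hom module_hom.zero by blast

lemma dual_diff: "e \<in> dual smul A p \<Longrightarrow> e (x - y) = e x - e y"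
  using dual_hom module_hom.diff by blast

lemma linear_intro:
  assumes "\<And>x y. e (x + y) = e x + e y" "\<And>c x. e (smul c x) = c * e x"
  shows "Vector_Spaces.linear smul (*) e"
  using assms module_mult_field module_axioms
  unfolding module_hom_iff_linear[symmetric] module_hom_iff by auto

lemma precompact_bounded:
  assumes "precompact_wrt (p \<alpha>) K" "\<alpha> \<in> A"
  shows "\<exists>B. \<forall>x\<in>K. p \<alpha> x \<le> B"
proof -
  obtain F where F: "finite F" "K \<subseteq> (\<Union>y\<in>F. {x. p \<alpha> (x - y) < 1})"
    using assms unfolding precompact_wrt_def by (meson zero_less_one)
  define B where "B = 1 + (\<Sum>y\<in>F. p \<alpha> y)"
  have "p \<alpha> x \<le> B" if "x \<in> K" for x
  proof -
    have "x \<in> (\<Union>y\<in>F. {x. p \<alpha> (x - y) < 1})" using F(2) that by (rule subsetD)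
    then obtain y where y: "y \<in> F" "p \<alpha> (x - y) < 1" by blast
    have "p \<alpha> x \<le> p \<alpha> (x - y) + p \<alpha> y" using p_tri[of \<alpha> "x - y" y] assms by simp
    also have "p \<alpha> y \<le> (\<Sum>y\<in>F. p \<alpha> y)"
      using y F assms by (intro member_le_sum) (auto simp: p_nonneg)
    finally show ?thesis using y unfolding B_def by simp
  qed
  then show ?thesis by blast
qed

lemma dual_bounded_on_precompact:
  assumes e: "e \<in> dual smul A p" and K: "precompact_lcs A p K"
  shows "\<exists>B. \<forall>x\<in>K. norm (e x) \<le> B"
proof -
  have "openin (Etop A p) {x \<in> topspace (Etop A p). e x \<in> ball 0 1}"
    using e unfolding dual_def by (intro openin_continuous_map_preimage) auto
  moreover have "0 \<in> {x \<in> topspace (Etop A p). e x \<in> ball 0 1}" using dual_zero[OF e] by simp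
  ultimately obtain F \<epsilon> where F: "finite F" "F \<subseteq> A" "\<epsilon> > 0"
     "{y. \<forall>i\<in>F. p i (y - 0) < \<epsilon>} \<subseteq> {x. e x \<in> ball 0 1}"
    unfolding Etop_def openin_seminorm_topology by (auto simp del: diff_0_right)
  have "\<forall>i\<in>F. \<exists>B. \<forall>x\<in>K. p i x \<le> B"
    using K F precompact_bounded unfolding precompact_lcs_def by blast
  then obtain Bi where Bi: "\<And>i x. i \<in> F \<Longrightarrow> x \<in> K \<Longrightarrow> p i x \<le> Bi i" by metis
  define B where "B = (\<Sum>i\<in>F. \<bar>Bi i\<bar>) + 1"
  have Bpos: "B > 0" unfolding B_def by (simp add: sum_nonneg add_nonneg_pos)
  have Bge: "Bi i \<le> B" if "i \<in> F" for i
  proof -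
    have "\<bar>Bi i\<bar> \<le> (\<Sum>i\<in>F. \<bar>Bi i\<bar>)" using F that by (intro member_le_sum) auto
    then show ?thesis unfolding B_def by simp
  qed
  define t where "t = \<epsilon> / (2 * B)"
  have tpos: "t > 0" using Bpos F by (simp add: t_def)
  have "norm (e x) \<le> 1 / t" if x: "x \<in> K" for x
  proof -
    have "p i (smul (of_real t) x) < \<epsilon>" if i: "i \<in> F" for i
    proof -
      have iA: "i \<in> A" using i F by blast
      have "p i (smul (of_real t) x) = t * p i x" using iA tpos by (simp add: p_smul)
      also have "\<dots> \<le> t * B" using Bi[OF i x] Bge[OF i] tpos by simp
      also have "\<dots> = \<epsilon> / 2" unfolding t_def using Bpos by simp
      finally show ?thesis using F by simp
    qed
    then have "norm (e (smul (of_real t) x)) < 1" using F(4) by auto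
    then have "t * norm (e x) < 1" using dual_scale[OF e] tpos by (simp add: norm_mult)
    then show ?thesis using tpos by (simp add: field_simps)
  qed
  then show ?thesis by blast
qed

lemma relcomp_precompact:
  assumes "relatively_compact (Etop A p) B"
  shows "precompact_lcs A p B"
  unfolding precompact_lcs_def precompact_wrt_def
proof (intro ballI allI impI)
  fix \<alpha> and \<epsilon> :: real assume \<alpha>: "\<alpha> \<in> A" and e: "\<epsilon> > 0"
  let ?C = "Etop A p closure_of B"
  have cC: "compactin (Etop A p) ?C" using assms unfolding relatively_compact_def .
  have BC: "B \<subseteq> ?C" by (rule closure_of_subset) simp
  let ?f = "\<lambda>y. {x. p \<alpha> (x - y) < \<epsilon>}"
  have "\<forall>U\<in>?f ` ?C. openin (Etop A p) U" using \<alpha> Etop_ball_open by auto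
  moreover have "?C \<subseteq> \<Union>(?f ` ?C)" using \<alpha> e p_zero by auto
  ultimately obtain F where F: "finite F" "F \<subseteq> ?f ` ?C" "?C \<subseteq> \<Union>F"
    using cC unfolding compactin_def by meson
  then obtain G where G: "G \<subseteq> ?C" "finite G" "F = ?f ` G" by (meson finite_subset_image)
  show "\<exists>F. finite F \<and> B \<subseteq> (\<Union>y\<in>F. {x. p \<alpha> (x - y) < \<epsilon>})"
    using G F BC by (intro exI[of _ G]) auto
qed

lemma schwartz_precompact:
  assumes S: "Schwartz A p" and B: "bounded_lcs A p B"
  shows "precompact_lcs A p B"
  unfolding precompact_lcs_def precompact_wrt_def
proof (intro ballI allI impI)
  fix \<alpha> and \<epsilon> :: real assume \<alpha>: "\<alpha> \<in> A" and e: "\<epsilon> > 0"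
  obtain \<beta> where \<beta>: "\<beta> \<in> A" "precompact_wrt (p \<alpha>) {x. p \<beta> x < 1}" using S \<alpha> unfolding Schwartz_def by blast
  obtain R where R: "\<And>x. x \<in> B \<Longrightarrow> p \<beta> x \<le> R" using B \<beta> unfolding bounded_lcs_def by blast
  define t where "t = \<bar>R\<bar> + 1"
  have tpos: "t > 0" by (simp add: t_def)
  obtain F where F: "finite F" "{x. p \<beta> x < 1} \<subseteq> (\<Union>y\<in>F. {x. p \<alpha> (x - y) < \<epsilon> / t})"
    using \<beta>(2) e tpos unfolding precompact_wrt_def by (meson divide_pos_pos)
  have "x \<in> (\<Union>y\<in>(smul (of_real t)) ` F. {x. p \<alpha> (x - y) < \<epsilon>})" if x: "x \<in> B" for x
  proof -
    have "p \<beta> (smul (of_real (1/t)) x) = p \<beta> x / t" using \<beta> tpos by (simp add: p_smul norm_divide)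
    also have "\<dots> < 1" using R[OF x] tpos by (simp add: t_def)
    finally obtain y where y: "y \<in> F" "p \<alpha> (smul (of_real (1/t)) x - y) < \<epsilon> / t" using F by blast
    have "smul (of_real t) (smul (of_real (1/t)) x - y) = x - smul (of_real t) y"
      using tpos by (simp add: scale_right_diff_distrib scale_scale of_real_mult[symmetric] del: of_real_mult)
    then have "p \<alpha> (x - smul (of_real t) y) = t * p \<alpha> (smul (of_real (1/t)) x - y)"
      using \<alpha> tpos by (metis p_smul norm_of_real abs_of_pos)
    also have "\<dots> < \<epsilon>" using y tpos by (simp add: field_simps)
    finally show ?thesis using y by blast
  qed
  then show "\<exists>F. finite F \<and> B \<subseteq> (\<Union>y\<in>F. {x. p \<alpha> (x - y) < \<epsilon>})"
    using F by (intro exI[of _ "smul (of_real t) ` F"]) blast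
qed

lemma bounded_precompact:
  assumes "semi_Montel A p \<or> Schwartz A p" "bounded_lcs A p B"
  shows "precompact_lcs A p B"
  using assms relcomp_precompact schwartz_precompact unfolding semi_Montel_def by blast

lemma field_compact:
  assumes ne: "\<exists>x::'e. x \<noteq> 0" and MS: "semi_Montel A p \<or> Schwartz A p"
  shows "compact (cball (0::'k) r)"
proof (rule totally_bounded_field_compact)
  fix r and \<epsilon> :: real assume e: "\<epsilon> > 0"
  obtain x0 :: 'e where x0: "x0 \<noteq> 0" using ne by blast
  obtain \<alpha> where \<alpha>: "\<alpha> \<in> A" "p \<alpha> x0 \<noteq> 0" using lcs x0 unfolding lcs_seminorms_def by blast
  have ppos: "p \<alpha> x0 > 0" using \<alpha> p_nonneg[of \<alpha> x0] by simp
  let ?L = "(\<lambda>c. smul c x0) ` cball (0::'k) r"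
  have "bounded_lcs A p ?L"
    unfolding bounded_lcs_def
  proof
    fix \<beta> assume \<beta>: "\<beta> \<in> A"
    have "p \<beta> (smul c x0) \<le> \<bar>r\<bar> * p \<beta> x0" if "c \<in> cball 0 r" for c
      using that \<beta> p_nonneg[of \<beta> x0] by (auto simp: p_smul intro!: mult_right_mono)
    then show "\<exists>C. \<forall>x\<in>?L. p \<beta> x \<le> C" by blast
  qed
  then have "precompact_wrt (p \<alpha>) ?L" using bounded_precompact[OF MS] \<alpha> unfolding precompact_lcs_def by blast
  then obtain F where F: "finite F" "?L \<subseteq> (\<Union>y\<in>F. {x. p \<alpha> (x - y) < \<epsilon> * p \<alpha> x0 / 2})"
    unfolding precompact_wrt_def using e ppos by (meson divide_pos_pos mult_pos_pos zero_less_numeral)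
  define G where "G = {y\<in>F. \<exists>c\<in>cball 0 r. p \<alpha> (smul c x0 - y) < \<epsilon> * p \<alpha> x0 / 2}"
  define cy where "cy y = (SOME c. c \<in> cball 0 r \<and> p \<alpha> (smul c x0 - y) < \<epsilon> * p \<alpha> x0 / 2)" for y
  have cy: "cy y \<in> cball 0 r \<and> p \<alpha> (smul (cy y) x0 - y) < \<epsilon> * p \<alpha> x0 / 2" if "y \<in> G" for y
  proof -
    from that obtain c where "c \<in> cball 0 r \<and> p \<alpha> (smul c x0 - y) < \<epsilon> * p \<alpha> x0 / 2"
      unfolding G_def by blast
    then show ?thesis unfolding cy_def by (rule someI)
  qed
  have cov: "c \<in> (\<Union>d\<in>cy ` G. ball d \<epsilon>)" if c: "c \<in> cball 0 r" for c
  proof -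
    have "smul c x0 \<in> ?L" using c by (rule imageI)
    then have "smul c x0 \<in> (\<Union>y\<in>F. {x. p \<alpha> (x - y) < \<epsilon> * p \<alpha> x0 / 2})" using F(2) by (rule subsetD[rotated])
    then obtain y where y: "y \<in> F" "p \<alpha> (smul c x0 - y) < \<epsilon> * p \<alpha> x0 / 2" by blast
    then have yG: "y \<in> G" using c unfolding G_def by blast
    have "p \<alpha> (smul c x0 - smul (cy y) x0) \<le> p \<alpha> (smul c x0 - y) + p \<alpha> (y - smul (cy y) x0)"
      using \<alpha>(1) by (rule p_diff_tri)
    also have "p \<alpha> (y - smul (cy y) x0) = p \<alpha> (smul (cy y) x0 - y)" using \<alpha>(1) by (rule p_diff_sym)
    finally have "norm (c - cy y) * p \<alpha> x0 < \<epsilon> * p \<alpha> x0"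
      using y cy[OF yG] \<alpha> by (simp add: p_smul_diff)
    then have "norm (c - cy y) < \<epsilon>" using ppos by simp
    then show ?thesis using yG by (auto simp: dist_norm norm_minus_commute)
  qed
  have "finite G" unfolding G_def using F(1) by (rule finite_subset[rotated]) blast
  then have fin: "finite (cy ` G)" by (rule finite_imageI)
  have "cball 0 r \<subseteq> (\<Union>c\<in>cy ` G. ball c \<epsilon>)" using cov by (rule subsetI)
  then show "\<exists>F. finite F \<and> cball (0::'k) r \<subseteq> (\<Union>c\<in>F. ball c \<epsilon>)" using fin by (intro exI[of _ "cy ` G"] conjI)
qed

lemma dual_norm_le:
  assumes e: "e \<in> polar_ball smul A p \<alpha>" and \<alpha>: "\<alpha> \<in> A"
  shows "norm (e x) \<le> p \<alpha> x"
proof (rule ccontr)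
  assume "\<not> norm (e x) \<le> p \<alpha> x"
  then have lt: "p \<alpha> x < norm (e x)" by simp
  define t where "t = (p \<alpha> x + norm (e x)) / 2"
  have t: "p \<alpha> x < t" "t < norm (e x)" using lt by (auto simp: t_def)
  have tpos: "t > 0" using t p_nonneg[OF \<alpha>, of x] by simp
  have "p \<alpha> (smul (of_real (1/t)) x) = p \<alpha> x / t" using \<alpha> tpos by (simp add: p_smul norm_divide)
  also have "\<dots> < 1" using t tpos by simp
  finally have "norm (e (smul (of_real (1/t)) x)) \<le> 1" using e unfolding polar_ball_def by blast
  then have "norm (e x) / t \<le> 1" using e tpos unfolding polar_ball_def
    by (simp add: dual_scale norm_mult norm_divide)
  then show False using t tpos by (simp add: field_simps)
qed

lemma bounded_linear_in_dual:
  assumes add: "\<And>x y. e (x + y) = e x + e y" and sc: "\<And>c x. e (smul c x) = c * e x"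
    and bd: "\<And>x. norm (e x) \<le> p \<alpha> x" and \<alpha>: "\<alpha> \<in> A"
  shows "e \<in> dual smul A p"
  unfolding dual_def
proof (intro CollectI conjI)
  show "Vector_Spaces.linear smul (*) e" using add sc by (rule linear_intro)
  have ediff: "e y - e x = e (y - x)" for x y using add[of "y - x" x] by simp
  show "continuous_map (Etop A p) euclidean e"
    unfolding continuous_map_def
  proof (intro conjI allI impI)
    show "e \<in> topspace (Etop A p) \<rightarrow> topspace euclidean" by simp
    fix U :: "'k set" assume "openin euclidean U"
    then have U: "open U" by simp
    show "openin (Etop A p) {x \<in> topspace (Etop A p). e x \<in> U}"
      unfolding openin_subopen[of _ "{x \<in> topspace (Etop A p). e x \<in> U}"]
    proof
      fix x assume "x \<in> {x \<in> topspace (Etop A p). e x \<in> U}"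
      then have "e x \<in> U" by simp
      then obtain r where r: "r > 0" "ball (e x) r \<subseteq> U" using U open_contains_ball by blast
      have "{y. p \<alpha> (y - x) < r} \<subseteq> {x \<in> topspace (Etop A p). e x \<in> U}"
      proof
        fix y assume "y \<in> {y. p \<alpha> (y - x) < r}"
        then have "norm (e y - e x) < r" using bd[of "y - x"] ediff by simp
        then show "y \<in> {x \<in> topspace (Etop A p). e x \<in> U}" using r by (auto simp: dist_norm norm_minus_commute)
      qed
      moreover have "x \<in> {y. p \<alpha> (y - x) < r}" using r p_zero[OF \<alpha>] by simp
      ultimately show "\<exists>T. openin (Etop A p) T \<and> x \<in> T \<and> T \<subseteq> {x \<in> topspace (Etop A p). e x \<in> U}"
        using Etop_ball_open[OF \<alpha>] by blast
    qed
  qed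
qed

lemma polar_ball_char:
  assumes \<alpha>: "\<alpha> \<in> A"
  shows "polar_ball smul A p \<alpha> = {e. (\<forall>x y. e (x + y) = e x + e y) \<and> (\<forall>c x. e (smul c x) = c * e x) \<and> (\<forall>x. norm (e x) \<le> p \<alpha> x)}"
proof safe
  fix e assume e: "e \<in> polar_ball smul A p \<alpha>"
  then have ed: "e \<in> dual smul A p" unfolding polar_ball_def by blast
  show "e (x + y) = e x + e y" for x y using ed by (rule dual_add)
  show "e (smul c x) = c * e x" for c x using ed by (rule dual_scale)
  show "norm (e x) \<le> p \<alpha> x" for x using e \<alpha> by (rule dual_norm_le)
next
  fix e assume a: "\<forall>x y. e (x + y) = e x + e y" "\<forall>c x. e (smul c x) = c * e x" "\<forall>x. norm (e x) \<le> p \<alpha> x"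
  then have "e \<in> dual smul A p" using \<alpha> by (intro bounded_linear_in_dual) auto
  moreover have "norm (e x) \<le> 1" if "p \<alpha> x < 1" for x using a(3) that by (metis less_imp_le order_trans)
  ultimately show "e \<in> polar_ball smul A p \<alpha>" unfolding polar_ball_def by blast
qed

end


context lcsE begin
lemma proj_cont: "continuous_map (product_topology (\<lambda>_::'e. (euclidean::'k topology)) UNIV) euclidean (\<lambda>g. g x)"
  using continuous_map_product_projection[of x UNIV "\<lambda>_::'e. (euclidean::'k topology)"] by simp

lemma closedin_preimage_const:
  assumes "continuous_map (product_topology (\<lambda>_::'e. (euclidean::'k topology)) UNIV) euclidean h"
    and "closed C"
  shows "closedin (product_topology (\<lambda>_::'e. (euclidean::'k topology)) UNIV) {g. h g \<in> C}"
  using closedin_continuous_map_preimage[OF assms(1), of C] assms(2) by simp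

lemma closedin_INT_UNIV:
  assumes "\<And>i. closedin X (B i)"
  shows "closedin X (\<Inter>i\<in>UNIV. B i)"
  by (rule closedin_Inter) (use assms in auto)

lemma polar_compact:
  assumes ne: "\<exists>x::'e. x \<noteq> 0" and MS: "semi_Montel A p \<or> Schwartz A p" and \<alpha>: "\<alpha> \<in> A"
  shows "compactin (product_topology (\<lambda>_::'e. (euclidean::'k topology)) UNIV) (polar_ball smul A p \<alpha>)"
proof -
  let ?P = "product_topology (\<lambda>_::'e. (euclidean::'k topology)) UNIV"
  let ?Box = "PiE UNIV (\<lambda>x. cball (0::'k) (p \<alpha> x))"
  have cB: "compactin ?P ?Box"
    unfolding compactin_PiE using field_compact[OF ne MS] by simp
  have sub: "polar_ball smul A p \<alpha> \<subseteq> ?Box"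
    using polar_ball_char[OF \<alpha>] by (auto simp: PiE_UNIV_domain)
  let ?C1 = "\<Inter>xy\<in>UNIV. {g. (\<lambda>g. g (fst xy + snd xy) - g (fst xy) - g (snd xy)) g \<in> {0::'k}}"
  let ?C2 = "\<Inter>cx\<in>UNIV. {g. (\<lambda>g. g (smul (fst cx) (snd cx)) - fst cx * g (snd cx)) g \<in> {0::'k}}"
  let ?C3 = "\<Inter>x\<in>UNIV. {g. (\<lambda>g. g x) g \<in> cball (0::'k) (p \<alpha> x)}"
  have eq: "polar_ball smul A p \<alpha> = ?C1 \<inter> ?C2 \<inter> ?C3"
    unfolding polar_ball_char[OF \<alpha>] by (auto simp: algebra_simps)
  have c1: "closedin ?P ?C1"
  proof (rule closedin_INT_UNIV)
    fix xy :: "'e \<times> 'e"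
    show "closedin ?P {g. (\<lambda>g. g (fst xy + snd xy) - g (fst xy) - g (snd xy)) g \<in> {0::'k}}"
      by (intro closedin_preimage_const continuous_map_diff proj_cont) simp
  qed
  have c2: "closedin ?P ?C2"
  proof (rule closedin_INT_UNIV)
    fix cx :: "'k \<times> 'e"
    have "continuous_map ?P euclidean (\<lambda>g. fst cx * g (snd cx))"
      using proj_cont[of "snd cx", unfolded continuous_map_atin]
      by (simp add: continuous_map_atin tendsto_mult_left)
    then show "closedin ?P {g. (\<lambda>g. g (smul (fst cx) (snd cx)) - fst cx * g (snd cx)) g \<in> {0::'k}}"
      by (intro closedin_preimage_const continuous_map_diff proj_cont) simp_all
  qed
  have c3: "closedin ?P ?C3"
    by (intro closedin_INT_UNIV closedin_preimage_const proj_cont) simp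
  have "closedin ?P (polar_ball smul A p \<alpha>)" unfolding eq using c1 c2 c3 by (intro closedin_Int)
  then show ?thesis using closed_compactin[OF cB sub] by blast
qed

end


locale P44 = lcsE smul A p
  for smul :: "'k::real_normed_field \<Rightarrow> 'e::ab_group_add \<Rightarrow> 'e" and A :: "'a set" and p +
  fixes \<Omega> :: "'x set" and J :: "'j set" and L :: "'l set" and M :: "'l \<Rightarrow> 'm set"
    and \<nu> :: "'j \<Rightarrow> 'l \<Rightarrow> 'm \<Rightarrow> 'x \<Rightarrow> real" and M0 Mr :: "'m set" and \<omega> :: "'m \<Rightarrow> 'x set"
    and domT :: "'m \<Rightarrow> ('x \<Rightarrow> 'k) set" and T :: "'m \<Rightarrow> ('x \<Rightarrow> 'k) \<Rightarrow> 'x \<Rightarrow> 'k"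
    and U :: "('m \<times> 'x) set" and f :: "'m \<times> 'x \<Rightarrow> 'e"
  assumes FVd: "FV_data \<Omega> J L M \<nu> M0 Mr \<omega> domT T"
    and dom: "dom_space \<Omega> J L M \<nu> M0 Mr \<omega> domT T"
    and fixtop: "fixes_topology \<Omega> J L M \<nu> M0 Mr \<omega> domT T U"
    and fE: "f \<in> FVE_lb smul A p \<Omega> J L M \<nu> M0 Mr \<omega> domT T U"
begin

abbreviation "Mall \<equiv> (\<Union>l\<in>L. M l) \<union> M0 \<union> Mr"
abbreviation "V \<equiv> FVspace \<Omega> J L M \<nu> M0 Mr \<omega> domT T"
abbreviation "sn \<equiv> FVsn \<Omega> M \<nu> T"
abbreviation "R \<equiv> Rmap \<Omega> J L M \<nu> M0 Mr \<omega> domT T U f"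
abbreviation "Vtop \<equiv> FVtop \<Omega> J L M \<nu> M0 Mr \<omega> domT T"

lemma FV_LM: "L \<noteq> {}" "\<forall>l\<in>L. M l \<noteq> {}"
  by (rule conjunct1[OF conjunct2[OF conjunct2[OF FVd[unfolded FV_data_def]]]], rule conjunct1[OF conjunct2[OF conjunct2[OF conjunct2[OF FVd[unfolded FV_data_def]]]]])

lemma Mall_ne: "\<exists>m. m \<in> Mall"
proof -
  obtain l where l: "l \<in> L" using FV_LM(1) by blast
  then obtain m where "m \<in> M l" using FV_LM(2) by blast
  then show ?thesis using l by blast
qed

lemma FV_nonneg: "\<forall>j\<in>J. \<forall>l\<in>L. \<forall>m\<in>M l. \<forall>x\<in>\<Omega>. \<nu> j l m x \<ge> 0"
  by (rule conjunct1[OF conjunct2[OF conjunct2[OF conjunct2[OF conjunct2[OF FVd[unfolded FV_data_def]]]]]])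

lemma nu_nonneg: "j \<in> J \<Longrightarrow> l \<in> L \<Longrightarrow> m \<in> M l \<Longrightarrow> x \<in> \<Omega> \<Longrightarrow> 0 \<le> \<nu> j l m x"
  using FV_nonneg by blast

lemma FV_dom_all: "\<forall>m\<in>Mall.
        domT m \<subseteq> {f. \<forall>x. x \<notin> \<Omega> \<longrightarrow> f x = 0} \<and>
        (\<lambda>x. 0) \<in> domT m \<and>
        (\<forall>f\<in>domT m. \<forall>g\<in>domT m. (\<lambda>x. f x + g x) \<in> domT m \<and>
            T m (\<lambda>x. f x + g x) = (\<lambda>x. T m f x + T m g x)) \<and>
        (\<forall>f\<in>domT m. \<forall>c. (\<lambda>x. c * f x) \<in> domT m \<and> T m (\<lambda>x. c * f x) = (\<lambda>x. c * T m f x)) \<and>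
        (\<forall>f\<in>domT m. \<forall>x. x \<notin> \<omega> m \<longrightarrow> T m f x = 0)"
  by (rule conjunct2[OF conjunct2[OF conjunct2[OF conjunct2[OF conjunct2[OF conjunct2[OF conjunct2[OF conjunct2[OF conjunct2[OF conjunct2[OF conjunct2[OF FVd[unfolded FV_data_def]]]]]]]]]]]])

lemma domT_out: "m \<in> Mall \<Longrightarrow> g \<in> domT m \<Longrightarrow> x \<notin> \<Omega> \<Longrightarrow> g x = 0"
  using conjunct1[OF bspec[OF FV_dom_all]] by blast

lemma domT_zero: "m \<in> Mall \<Longrightarrow> (\<lambda>x. 0) \<in> domT m"
  using conjunct1[OF conjunct2[OF bspec[OF FV_dom_all]]] by blast

lemma domT_add: "m \<in> Mall \<Longrightarrow> g \<in> domT m \<Longrightarrow> h \<in> domT m \<Longrightarrow>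
    (\<lambda>x. g x + h x) \<in> domT m \<and> T m (\<lambda>x. g x + h x) = (\<lambda>x. T m g x + T m h x)"
  using conjunct1[OF conjunct2[OF conjunct2[OF bspec[OF FV_dom_all]]]] by blast

lemma domT_scale: "m \<in> Mall \<Longrightarrow> g \<in> domT m \<Longrightarrow>
    (\<lambda>x. c * g x) \<in> domT m \<and> T m (\<lambda>x. c * g x) = (\<lambda>x. c * T m g x)"
  using conjunct1[OF conjunct2[OF conjunct2[OF conjunct2[OF bspec[OF FV_dom_all]]]]] by blast

lemma domT_diff: 
  assumes "m \<in> Mall" "g \<in> domT m" "h \<in> domT m"
  shows "g - h \<in> domT m \<and> T m (g - h) = (\<lambda>x. T m g x - T m h x)"
proof -
  have e: "g - h = (\<lambda>x. g x + (-1) * h x)" by (rule ext) simp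
  have "(\<lambda>x. (-1) * h x) \<in> domT m \<and> T m (\<lambda>x. (-1) * h x) = (\<lambda>x. (-1) * T m h x)"
    using assms by (intro domT_scale) auto
  then show ?thesis unfolding e using domT_add[OF assms(1,2), of "\<lambda>x. (-1) * h x"] by simp
qed

lemma T_zero: "m \<in> Mall \<Longrightarrow> T m (\<lambda>x. 0) = (\<lambda>x. 0)"
  using domT_scale[of m "\<lambda>x. 0" 0] domT_zero by simp

lemma V_iff: "g \<in> V \<longleftrightarrow> (\<forall>m\<in>Mall. g \<in> domT m) \<and> (\<forall>m\<in>M0. \<forall>x\<in>\<omega> m. T m g x = 0) \<and>
     (\<forall>j\<in>J. \<forall>l\<in>L. bdd_above {norm (T m g x) * \<nu> j l m x | x m. x \<in> \<Omega> \<and> m \<in> M l})"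
  unfolding FVspace_def by simp

lemma V_dom: "g \<in> V \<Longrightarrow> m \<in> Mall \<Longrightarrow> g \<in> domT m"
  unfolding V_iff by blast

lemma V_bdd: "g \<in> V \<Longrightarrow> j \<in> J \<Longrightarrow> l \<in> L \<Longrightarrow> bdd_above {norm (T m g x) * \<nu> j l m x | x m. x \<in> \<Omega> \<and> m \<in> M l}"
  by (rule bspec[OF bspec[OF conjunct2[OF conjunct2[OF iffD1[OF V_iff]]]]])

lemma bdd_lin:
  fixes a b c :: "'m \<Rightarrow> 'x \<Rightarrow> real" and s t :: real
  assumes "bdd_above {a m x | x m. x \<in> \<Omega> \<and> m \<in> M l}" "bdd_above {b m x | x m. x \<in> \<Omega> \<and> m \<in> M l}"
    and "\<And>x m. x \<in> \<Omega> \<Longrightarrow> m \<in> M l \<Longrightarrow> c m x \<le> s * a m x + t * b m x" "s \<ge> 0" "t \<ge> 0"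
  shows "bdd_above {c m x | x m. x \<in> \<Omega> \<and> m \<in> M l}"
proof -
  obtain Ba where Ba: "\<And>x m. x \<in> \<Omega> \<Longrightarrow> m \<in> M l \<Longrightarrow> a m x \<le> Ba"
    using assms(1) unfolding bdd_above_def by blast
  obtain Bb where Bb: "\<And>x m. x \<in> \<Omega> \<Longrightarrow> m \<in> M l \<Longrightarrow> b m x \<le> Bb"
    using assms(2) unfolding bdd_above_def by blast
  have "c m x \<le> s * Ba + t * Bb" if "x \<in> \<Omega>" "m \<in> M l" for x m
  proof -
    have "s * a m x \<le> s * Ba" using Ba[OF that] assms(4) by (rule mult_left_mono)
    moreover have "t * b m x \<le> t * Bb" using Bb[OF that] assms(5) by (rule mult_left_mono)
    ultimately show ?thesis using assms(3)[OF that] by linarith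
  qed
  then show ?thesis unfolding bdd_above_def by blast
qed

lemma V_zero: "(\<lambda>x. 0) \<in> V"
  unfolding V_iff
proof (intro conjI ballI)
  show "(\<lambda>x. 0) \<in> domT m" if "m \<in> Mall" for m using that by (rule domT_zero)
  show "T m (\<lambda>x. 0) x = 0" if "m \<in> M0" for m x using that T_zero[of m] by simp
  fix j l assume "j \<in> J" "l \<in> L"
  have "z \<le> 0" if "z \<in> {norm (T m (\<lambda>x. 0) x) * \<nu> j l m x | x m. x \<in> \<Omega> \<and> m \<in> M l}" for z
  proof -
    from that obtain x m where "z = norm (T m (\<lambda>x. 0) x) * \<nu> j l m x" "m \<in> M l" by blast
    moreover have "m \<in> Mall" using \<open>m \<in> M l\<close> \<open>l \<in> L\<close> by blast
    ultimately show ?thesis using T_zero[of m] by simp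
  qed
  then show "bdd_above {norm (T m (\<lambda>x. 0) x) * \<nu> j l m x | x m. x \<in> \<Omega> \<and> m \<in> M l}"
    by (rule bdd_aboveI)
qed

lemma V_add:
  assumes g: "g \<in> V" and h: "h \<in> V"
  shows "(\<lambda>x. g x + h x) \<in> V \<and> (\<forall>m\<in>Mall. T m (\<lambda>x. g x + h x) = (\<lambda>x. T m g x + T m h x))"
proof -
  have T: "T m (\<lambda>x. g x + h x) = (\<lambda>x. T m g x + T m h x)" if "m \<in> Mall" for m
    using domT_add[OF that V_dom[OF g that] V_dom[OF h that]] by blast
  have "(\<lambda>x. g x + h x) \<in> V"
    unfolding V_iff
  proof (intro conjI ballI)
    show "(\<lambda>x. g x + h x) \<in> domT m" if "m \<in> Mall" for m
      using domT_add[OF that V_dom[OF g that] V_dom[OF h that]] by blast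
    show "T m (\<lambda>x. g x + h x) x = 0" if "m \<in> M0" "x \<in> \<omega> m" for m x
      using that g h T[of m] unfolding V_iff by auto
    fix j l assume jl: "j \<in> J" "l \<in> L"
    show "bdd_above {norm (T m (\<lambda>x. g x + h x) x) * \<nu> j l m x | x m. x \<in> \<Omega> \<and> m \<in> M l}"
    proof (rule bdd_lin[OF V_bdd[OF g jl] V_bdd[OF h jl], of _ 1 1])
      fix x m assume xm: "x \<in> \<Omega>" "m \<in> M l"
      have "m \<in> Mall" using xm jl by blast
      then have "norm (T m (\<lambda>x. g x + h x) x) = norm (T m g x + T m h x)" using T by simp
      also have "\<dots> \<le> norm (T m g x) + norm (T m h x)" by (rule norm_triangle_ineq)
      finally show "norm (T m (\<lambda>x. g x + h x) x) * \<nu> j l m x \<le> 1 * (norm (T m g x) * \<nu> j l m x) + 1 * (norm (T m h x) * \<nu> j l m x)"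
        using nu_nonneg[OF jl xm(2,1)] by (simp add: mult_right_mono distrib_right[symmetric])
    qed auto
  qed
  then show ?thesis using T by blast
qed

lemma V_scale:
  assumes g: "g \<in> V"
  shows "(\<lambda>x. c * g x) \<in> V \<and> (\<forall>m\<in>Mall. T m (\<lambda>x. c * g x) = (\<lambda>x. c * T m g x))"
proof -
  have T: "T m (\<lambda>x. c * g x) = (\<lambda>x. c * T m g x)" if "m \<in> Mall" for m
    using domT_scale[OF that V_dom[OF g that]] by blast
  have "(\<lambda>x. c * g x) \<in> V"
    unfolding V_iff
  proof (intro conjI ballI)
    show "(\<lambda>x. c * g x) \<in> domT m" if "m \<in> Mall" for m
      using domT_scale[OF that V_dom[OF g that]] by blast
    show "T m (\<lambda>x. c * g x) x = 0" if "m \<in> M0" "x \<in> \<omega> m" for m x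
      using that g T[of m] unfolding V_iff by auto
    fix j l assume jl: "j \<in> J" "l \<in> L"
    show "bdd_above {norm (T m (\<lambda>x. c * g x) x) * \<nu> j l m x | x m. x \<in> \<Omega> \<and> m \<in> M l}"
    proof (rule bdd_lin[OF V_bdd[OF g jl] V_bdd[OF g jl], of _ "norm c" 0])
      fix x m assume xm: "x \<in> \<Omega>" "m \<in> M l"
      have "m \<in> Mall" using xm jl by blast
      then show "norm (T m (\<lambda>x. c * g x) x) * \<nu> j l m x \<le> norm c * (norm (T m g x) * \<nu> j l m x) + 0 * (norm (T m g x) * \<nu> j l m x)"
        using T by (simp add: norm_mult)
    qed auto
  qed
  then show ?thesis using T by blast
qed

lemma V_diff:
  assumes g: "g \<in> V" and h: "h \<in> V"
  shows "g - h \<in> V \<and> (\<forall>m\<in>Mall. T m (g - h) = (\<lambda>x. T m g x - T m h x))"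
proof -
  define h' where "h' = (\<lambda>x. (-1) * h x)"
  have e: "g - h = (\<lambda>x. g x + h' x)" unfolding h'_def by (rule ext) simp
  have h': "h' \<in> V" "\<forall>m\<in>Mall. T m h' = (\<lambda>x. (-1) * T m h x)" using V_scale[OF h, of "-1"] unfolding h'_def by blast+
  have s: "(\<lambda>x. g x + h' x) \<in> V" "\<forall>m\<in>Mall. T m (\<lambda>x. g x + h' x) = (\<lambda>x. T m g x + T m h' x)"
    using V_add[OF g h'(1)] by blast+
  show ?thesis unfolding e using s h'(2) by simp
qed

end


context P44 begin

lemma wsup_least: "0 \<le> B \<Longrightarrow> (\<And>z. z \<in> S \<Longrightarrow> z \<le> B) \<Longrightarrow> wsup S \<le> B"
  unfolding wsup_def by (rule cSup_least) auto

lemma sn_least: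
  assumes "0 \<le> B" "\<And>x m. x \<in> \<Omega> \<Longrightarrow> m \<in> M l \<Longrightarrow> norm (T m g x) * \<nu> j l m x \<le> B"
  shows "sn j l g \<le> B"
  unfolding FVsn_def using assms by (intro wsup_least) auto

lemma sn_bdd: "g \<in> V \<Longrightarrow> j \<in> J \<Longrightarrow> l \<in> L \<Longrightarrow>
   bdd_above (insert 0 {norm (T m g x) * \<nu> j l m x | x m. x \<in> \<Omega> \<and> m \<in> M l})"
  using V_bdd by simp

lemma sn_upper:
  assumes "g \<in> V" "j \<in> J" "l \<in> L" "x \<in> \<Omega>" "m \<in> M l"
  shows "norm (T m g x) * \<nu> j l m x \<le> sn j l g"
  unfolding FVsn_def wsup_def
  by (rule cSup_upper[OF _ sn_bdd[OF assms(1-3)]]) (use assms(4,5) in blast)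

lemma sn_nonneg:
  assumes "g \<in> V" "j \<in> J" "l \<in> L"
  shows "0 \<le> sn j l g"
  unfolding FVsn_def wsup_def
  by (rule cSup_upper[OF _ sn_bdd[OF assms(1-3)]]) simp

lemma sn_tri:
  assumes g: "g \<in> V" and h: "h \<in> V" and k: "k \<in> V" and jl: "j \<in> J" "l \<in> L"
  shows "sn j l (g - h) \<le> sn j l (g - k) + sn j l (k - h)"
proof (rule sn_least)
  have gk: "g - k \<in> V" and kh: "k - h \<in> V" using V_diff g h k by blast+
  show "0 \<le> sn j l (g - k) + sn j l (k - h)" using sn_nonneg[OF gk jl] sn_nonneg[OF kh jl] by simp
  fix x m assume xm: "x \<in> \<Omega>" "m \<in> M l"
  have mA: "m \<in> Mall" using xm jl by blast
  have "T m (g - h) x = T m (g - k) x + T m (k - h) x"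
    using V_diff[OF g h] V_diff[OF g k] V_diff[OF k h] mA by simp
  then have "norm (T m (g - h) x) \<le> norm (T m (g - k) x) + norm (T m (k - h) x)"
    by (simp add: norm_triangle_ineq)
  then have "norm (T m (g - h) x) * \<nu> j l m x \<le> norm (T m (g - k) x) * \<nu> j l m x + norm (T m (k - h) x) * \<nu> j l m x"
    using nu_nonneg[OF jl xm(2,1)] by (metis distrib_right mult_right_mono)
  also have "\<dots> \<le> sn j l (g - k) + sn j l (k - h)"
    using sn_upper[OF gk jl xm] sn_upper[OF kh jl xm] by simp
  finally show "norm (T m (g - h) x) * \<nu> j l m x \<le> sn j l (g - k) + sn j l (k - h)" .
qed

lemma sn_sym_le:
  assumes g: "g \<in> V" and h: "h \<in> V" and jl: "j \<in> J" "l \<in> L"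
  shows "sn j l (g - h) \<le> sn j l (h - g)"
proof (rule sn_least)
  have hg: "h - g \<in> V" using V_diff g h by blast
  show "0 \<le> sn j l (h - g)" using sn_nonneg[OF hg jl] .
  fix x m assume xm: "x \<in> \<Omega>" "m \<in> M l"
  have mA: "m \<in> Mall" using xm jl by blast
  have "norm (T m (g - h) x) = norm (T m (h - g) x)"
    using V_diff[OF g h] V_diff[OF h g] mA by (simp add: norm_minus_commute)
  then show "norm (T m (g - h) x) * \<nu> j l m x \<le> sn j l (h - g)"
    using sn_upper[OF hg jl xm] by simp
qed

lemma sn_sym:
  assumes "g \<in> V" "h \<in> V" "j \<in> J" "l \<in> L"
  shows "sn j l (g - h) = sn j l (h - g)"
  using sn_sym_le[OF assms] sn_sym_le[OF assms(2,1,3,4)] by simp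

lemma sn_zero:
  assumes "j \<in> J" "l \<in> L"
  shows "sn j l 0 = 0"
proof -
  have z: "(0::'x \<Rightarrow> 'k) = (\<lambda>x. 0)" by (rule ext) simp
  have "sn j l 0 \<le> 0"
  proof (rule sn_least)
    fix x m assume "x \<in> \<Omega>" "m \<in> M l"
    then have "m \<in> Mall" using assms by blast
    then show "norm (T m 0 x) * \<nu> j l m x \<le> 0" unfolding z using T_zero by simp
  qed simp
  moreover have "0 \<le> sn j l 0" using sn_nonneg[OF V_zero assms] z by simp
  ultimately show ?thesis by simp
qed

lemma topspace_Vtop [simp]: "topspace Vtop = V"
  unfolding FVtop_def by simp

lemma Vtop_ball_open:
  assumes "j \<in> J" "l \<in> L" "g \<in> V"
  shows "openin Vtop {y\<in>V. sn j l (y - g) < r}"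
proof -
  have "openin Vtop {y\<in>V. (\<lambda>(j, l). sn j l) (j, l) (y - g) < r}"
    unfolding FVtop_def
    by (rule seminorm_ball_open) (use assms sn_tri in auto)
  then show ?thesis by simp
qed

lemma point_eval_cont: "x \<in> \<Omega> \<Longrightarrow> continuous_map Vtop euclidean (\<lambda>f. f x)"
  using conjunct2[OF dom[unfolded dom_space_def]] by blast

lemma separation:
  assumes g: "g \<in> V" and h: "h \<in> V" and z: "\<And>j l. j \<in> J \<Longrightarrow> l \<in> L \<Longrightarrow> sn j l (g - h) \<le> 0"
  shows "g = h"
proof (rule ccontr)
  assume "g \<noteq> h"
  then obtain x where gx: "g x \<noteq> h x" by blast
  define d where "d = g - h"
  have dV: "d \<in> V" using V_diff[OF g h] unfolding d_def by blast
  have dx: "d x \<noteq> 0" using gx unfolding d_def by simp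
  have xO: "x \<in> \<Omega>"
  proof (rule ccontr)
    assume "x \<notin> \<Omega>"
    obtain m where m: "m \<in> Mall" using Mall_ne by blast
    have "g x = 0" "h x = 0" using domT_out[OF m V_dom[OF g m]] domT_out[OF m V_dom[OF h m]] \<open>x \<notin> \<Omega>\<close> by auto
    then show False using gx by simp
  qed
  define r where "r = norm (d x)"
  have rpos: "r > 0" using dx unfolding r_def by simp
  have "openin Vtop {f \<in> topspace Vtop. f x \<in> ball 0 r}"
    using point_eval_cont[OF xO] by (rule openin_continuous_map_preimage) simp
  moreover have z0: "(\<lambda>x. 0) \<in> {f \<in> topspace Vtop. f x \<in> ball 0 r}" using V_zero rpos by simp
  ultimately obtain F \<epsilon> where F: "finite F" "F \<subseteq> J \<times> L" "\<epsilon> > 0"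
     "{y\<in>V. \<forall>i\<in>F. (\<lambda>(j, l). sn j l) i (y - (\<lambda>x. 0)) < \<epsilon>} \<subseteq> {f \<in> topspace Vtop. f x \<in> ball 0 r}"
    unfolding FVtop_def openin_seminorm_topology by blast
  have d0: "d - (\<lambda>x. 0) = d" by (rule ext) simp
  have "\<forall>i\<in>F. (\<lambda>(j, l). sn j l) i (d - (\<lambda>x. 0)) < \<epsilon>"
  proof
    fix i assume i: "i \<in> F"
    obtain j l where jl: "i = (j, l)" "j \<in> J" "l \<in> L" using F(2) i by blast
    have "sn j l d \<le> 0" using z[OF jl(2,3)] unfolding d_def .
    then show "(\<lambda>(j, l). sn j l) i (d - (\<lambda>x. 0)) < \<epsilon>" using jl F(3) d0 by simp
  qed
  then have "d \<in> {f \<in> topspace Vtop. f x \<in> ball 0 r}" using F(4) dV by blast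
  then have "norm (d x) < r" by simp
  then show False unfolding r_def by simp
qed

lemma sn_pos_of_neq:
  assumes "g \<in> V" "h \<in> V" "g \<noteq> h"
  shows "\<exists>j\<in>J. \<exists>l\<in>L. sn j l (g - h) > 0"
  using separation[OF assms(1,2)] assms(3) by force

lemma Hausdorff_Vtop: "Hausdorff_space Vtop"
  unfolding Hausdorff_space_def
proof (intro allI impI)
  fix g h assume a: "g \<in> topspace Vtop \<and> h \<in> topspace Vtop \<and> g \<noteq> h"
  then have g: "g \<in> V" and h: "h \<in> V" and ne: "g \<noteq> h" by auto
  obtain j l where jl: "j \<in> J" "l \<in> L" and pos: "sn j l (g - h) > 0" using sn_pos_of_neq[OF g h ne] by blast
  define r where "r = sn j l (g - h) / 2"
  let ?U = "{y\<in>V. sn j l (y - g) < r}" and ?W = "{y\<in>V. sn j l (y - h) < r}"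
  have "openin Vtop ?U" "openin Vtop ?W" using Vtop_ball_open jl g h by auto
  moreover have "g \<in> ?U" "h \<in> ?W" using g h pos sn_zero[OF jl] unfolding r_def by simp_all
  moreover have "disjnt ?U ?W"
    unfolding disjnt_def
  proof (rule equals0I)
    fix y assume y: "y \<in> ?U \<inter> ?W"
    then have yV: "y \<in> V" by blast
    have "sn j l (g - h) \<le> sn j l (g - y) + sn j l (y - h)" using sn_tri[OF g h yV jl] .
    also have "sn j l (g - y) = sn j l (y - g)" using sn_sym[OF g yV jl] .
    finally have le: "sn j l (g - h) \<le> sn j l (y - g) + sn j l (y - h)" .
    have "sn j l (y - g) < r" "sn j l (y - h) < r" using y by blast+
    then have "sn j l (g - h) < 2 * r" using le by linarith
    then show False unfolding r_def by simp
  qed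
  ultimately show "\<exists>U W. openin Vtop U \<and> openin Vtop W \<and> g \<in> U \<and> h \<in> W \<and> disjnt U W" by blast
qed

lemma fixtop_U: "U \<subseteq> {(m, x). m \<in> Mall \<and> x \<in> \<omega> m}"
  using conjunct1[OF fixtop[unfolded fixes_topology_def]] .

lemma fixtop_est:
  assumes "j \<in> J" "l \<in> L"
  shows "\<exists>i\<in>J. \<exists>k\<in>L. \<exists>C>0. \<forall>g\<in>V.
        sn j l g \<le> C * wsup {norm (T m g x) * \<nu> i k m x | x m. x \<in> \<Omega> \<and> m \<in> M k \<and> (m, x) \<in> U}"
  using bspec[OF bspec[OF conjunct2[OF fixtop[unfolded fixes_topology_def]] assms(1)] assms(2)] .

lemma R_unique:
  assumes g1: "g1 \<in> V" and g2: "g2 \<in> V" and eq: "\<And>m x. (m, x) \<in> U \<Longrightarrow> T m g1 x = T m g2 x"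
  shows "g1 = g2"
proof (rule separation[OF g1 g2])
  fix j l assume jl: "j \<in> J" "l \<in> L"
  obtain i k C where ikC: "i \<in> J" "k \<in> L" "C > 0"
    "\<And>g. g \<in> V \<Longrightarrow> sn j l g \<le> C * wsup {norm (T m g x) * \<nu> i k m x | x m. x \<in> \<Omega> \<and> m \<in> M k \<and> (m, x) \<in> U}"
    using fixtop_est[OF jl] by blast
  have dV: "g1 - g2 \<in> V" using V_diff[OF g1 g2] by blast
  have "wsup {norm (T m (g1 - g2) x) * \<nu> i k m x | x m. x \<in> \<Omega> \<and> m \<in> M k \<and> (m, x) \<in> U} \<le> 0"
  proof (rule wsup_least)
    fix z assume "z \<in> {norm (T m (g1 - g2) x) * \<nu> i k m x | x m. x \<in> \<Omega> \<and> m \<in> M k \<and> (m, x) \<in> U}"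
    then obtain x m where z: "z = norm (T m (g1 - g2) x) * \<nu> i k m x" "m \<in> M k" "(m, x) \<in> U" by blast
    have "m \<in> Mall" using z(2) ikC(2) by blast
    then have "T m (g1 - g2) x = 0" using V_diff[OF g1 g2] eq[OF z(3)] by simp
    then show "z \<le> 0" using z(1) by simp
  qed simp
  then have "C * wsup {norm (T m (g1 - g2) x) * \<nu> i k m x | x m. x \<in> \<Omega> \<and> m \<in> M k \<and> (m, x) \<in> U} \<le> C * 0"
    using ikC(3) by (intro mult_left_mono) auto
  then show "sn j l (g1 - g2) \<le> 0" using ikC(4)[OF dV] by linarith
qed

lemma R_eq:
  assumes "g \<in> V" "\<forall>(m, x)\<in>U. T m g x = e' (f (m, x))"
  shows "R e' = g"
  unfolding Rmap_def
proof (rule the_equality)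
  show "g \<in> V \<and> (\<forall>(m, x)\<in>U. T m g x = e' (f (m, x)))" using assms by blast
  fix h assume h: "h \<in> V \<and> (\<forall>(m, x)\<in>U. T m h x = e' (f (m, x)))"
  show "h = g"
  proof (rule R_unique)
    show "h \<in> V" "g \<in> V" using h assms(1) by blast+
    fix m x assume mx: "(m, x) \<in> U"
    have "T m h x = e' (f (m, x))" using bspec[OF conjunct2[OF h] mx] by simp
    moreover have "T m g x = e' (f (m, x))" using bspec[OF assms(2) mx] by simp
    ultimately show "T m h x = T m g x" by simp
  qed
qed

lemma fE_ex: "e' \<in> dual smul A p \<Longrightarrow> \<exists>g\<in>V. \<forall>(m, x)\<in>U. T m g x = e' (f (m, x))"
  using conjunct1[OF fE[unfolded FVE_lb_def mem_Collect_eq]] by (rule bspec)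

lemma R_prop:
  assumes "e' \<in> dual smul A p"
  shows "R e' \<in> V \<and> (\<forall>(m, x)\<in>U. T m (R e') x = e' (f (m, x)))"
proof -
  obtain g where "g \<in> V" "\<forall>(m, x)\<in>U. T m g x = e' (f (m, x))" using fE_ex[OF assms] by blast
  moreover then have "R e' = g" by (rule R_eq)
  ultimately show ?thesis by simp
qed

end


context P44 begin

lemma R_add:
  assumes e1: "e1 \<in> dual smul A p" and e2: "e2 \<in> dual smul A p"
  shows "R (\<lambda>x. e1 x + e2 x) = (\<lambda>y. R e1 y + R e2 y)"
proof (rule R_eq)
  have r1: "R e1 \<in> V" "\<forall>(m, x)\<in>U. T m (R e1) x = e1 (f (m, x))" using R_prop[OF e1] by blast+
  have r2: "R e2 \<in> V" "\<forall>(m, x)\<in>U. T m (R e2) x = e2 (f (m, x))" using R_prop[OF e2] by blast+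
  have s: "(\<lambda>y. R e1 y + R e2 y) \<in> V" "\<forall>m\<in>Mall. T m (\<lambda>y. R e1 y + R e2 y) = (\<lambda>x. T m (R e1) x + T m (R e2) x)"
    using V_add[OF r1(1) r2(1)] by blast+
  show "(\<lambda>y. R e1 y + R e2 y) \<in> V" using s(1) .
  show "\<forall>(m, x)\<in>U. T m (\<lambda>y. R e1 y + R e2 y) x = e1 (f (m, x)) + e2 (f (m, x))"
  proof (intro ballI, clarify)
    fix m x assume mx: "(m, x) \<in> U"
    have "m \<in> Mall" using fixtop_U mx by blast
    then show "T m (\<lambda>y. R e1 y + R e2 y) x = e1 (f (m, x)) + e2 (f (m, x))"
      using s(2) bspec[OF r1(2) mx] bspec[OF r2(2) mx] by simp
  qed
qed

lemma R_scale:
  assumes e: "e \<in> dual smul A p"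
  shows "R (\<lambda>x. c * e x) = (\<lambda>y. c * R e y)"
proof (rule R_eq)
  have r: "R e \<in> V" "\<forall>(m, x)\<in>U. T m (R e) x = e (f (m, x))" using R_prop[OF e] by blast+
  have s: "(\<lambda>y. c * R e y) \<in> V" "\<forall>m\<in>Mall. T m (\<lambda>y. c * R e y) = (\<lambda>x. c * T m (R e) x)"
    using V_scale[OF r(1)] by blast+
  show "(\<lambda>y. c * R e y) \<in> V" using s(1) .
  show "\<forall>(m, x)\<in>U. T m (\<lambda>y. c * R e y) x = c * e (f (m, x))"
  proof (intro ballI, clarify)
    fix m x assume mx: "(m, x) \<in> U"
    have "m \<in> Mall" using fixtop_U mx by blast
    then show "T m (\<lambda>y. c * R e y) x = c * e (f (m, x))"
      using s(2) bspec[OF r(2) mx] by simp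
  qed
qed

definition Nset :: "'j \<Rightarrow> 'l \<Rightarrow> 'e set" where
  "Nset i k = {smul (of_real (\<nu> i k m x)) (f (m, x)) | x m. x \<in> \<Omega> \<and> m \<in> M k \<and> (m, x) \<in> U}"

lemma Nset_bounded: "i \<in> J \<Longrightarrow> k \<in> L \<Longrightarrow> bounded_lcs A p (Nset i k)"
  unfolding Nset_def using conjunct2[OF fE[unfolded FVE_lb_def mem_Collect_eq]] by blast

lemma Kset_bounded:
  assumes "i \<in> J" "k \<in> L"
  shows "bounded_lcs A p (insert 0 (Nset i k))"
  unfolding bounded_lcs_def
proof
  fix \<alpha> assume \<alpha>: "\<alpha> \<in> A"
  obtain C where C: "\<forall>x\<in>Nset i k. p \<alpha> x \<le> C" using Nset_bounded[OF assms] \<alpha> unfolding bounded_lcs_def by blast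
  have "\<forall>x\<in>insert 0 (Nset i k). p \<alpha> x \<le> max C 0" using C p_zero[OF \<alpha>] by auto
  then show "\<exists>C. \<forall>x\<in>insert 0 (Nset i k). p \<alpha> x \<le> C" by blast
qed

lemma key_est:
  assumes e: "e \<in> dual smul A p" and e0: "e0 \<in> dual smul A p"
    and ik: "i \<in> J" "k \<in> L" and C: "C > 0"
    and est: "\<And>g. g \<in> V \<Longrightarrow> sn j l g \<le> C * wsup {norm (T m g x) * \<nu> i k m x | x m. x \<in> \<Omega> \<and> m \<in> M k \<and> (m, x) \<in> U}"
    and B: "0 \<le> B" and bd: "\<And>z. z \<in> Nset i k \<Longrightarrow> norm (e z - e0 z) \<le> B"
  shows "sn j l (R e - R e0) \<le> C * B"
proof -
  have r: "R e \<in> V" "\<forall>(m, x)\<in>U. T m (R e) x = e (f (m, x))" using R_prop[OF e] by blast+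
  have r0: "R e0 \<in> V" "\<forall>(m, x)\<in>U. T m (R e0) x = e0 (f (m, x))" using R_prop[OF e0] by blast+
  have d: "R e - R e0 \<in> V" "\<forall>m\<in>Mall. T m (R e - R e0) = (\<lambda>x. T m (R e) x - T m (R e0) x)"
    using V_diff[OF r(1) r0(1)] by blast+
  have "wsup {norm (T m (R e - R e0) x) * \<nu> i k m x | x m. x \<in> \<Omega> \<and> m \<in> M k \<and> (m, x) \<in> U} \<le> B"
  proof (rule wsup_least[OF B])
    fix z assume "z \<in> {norm (T m (R e - R e0) x) * \<nu> i k m x | x m. x \<in> \<Omega> \<and> m \<in> M k \<and> (m, x) \<in> U}"
    then obtain x m where z: "z = norm (T m (R e - R e0) x) * \<nu> i k m x" "x \<in> \<Omega>" "m \<in> M k" "(m, x) \<in> U"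
      by blast
    have mA: "m \<in> Mall" using z(3) ik by blast
    have nn: "0 \<le> \<nu> i k m x" using nu_nonneg[OF ik z(3,2)] .
    let ?w = "smul (of_real (\<nu> i k m x)) (f (m, x))"
    have wN: "?w \<in> Nset i k" unfolding Nset_def using z by blast
    have "T m (R e - R e0) x = e (f (m, x)) - e0 (f (m, x))"
      using d(2) mA bspec[OF r(2) z(4)] bspec[OF r0(2) z(4)] by simp
    then have "z = norm (of_real (\<nu> i k m x) * (e (f (m, x)) - e0 (f (m, x))))"
      using z(1) nn by (simp add: norm_mult)
    also have "of_real (\<nu> i k m x) * (e (f (m, x)) - e0 (f (m, x))) = e ?w - e0 ?w"
      using dual_scale[OF e] dual_scale[OF e0] by (simp add: algebra_simps)
    finally show "z \<le> B" using bd[OF wN] by simp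
  qed
  then have "C * wsup {norm (T m (R e - R e0) x) * \<nu> i k m x | x m. x \<in> \<Omega> \<and> m \<in> M k \<and> (m, x) \<in> U} \<le> C * B"
    using C by (intro mult_left_mono) auto
  then show ?thesis using est[OF d(1)] by linarith
qed

end


context P44 begin

abbreviation "Kfam \<equiv> {K. K \<noteq> {} \<and> precompact_lcs A p K}"
abbreviation "qf \<equiv> (\<lambda>K (g::'e \<Rightarrow> 'k). Sup ((\<lambda>x. norm (g x)) ` K))"

lemma qf_bdd:
  assumes a: "a \<in> dual smul A p" and b: "b \<in> dual smul A p" and K: "precompact_lcs A p K"
  shows "bdd_above ((\<lambda>x. norm ((a - b) x)) ` K)"
proof -
  obtain Ba where Ba: "\<forall>x\<in>K. norm (a x) \<le> Ba" using dual_bounded_on_precompact[OF a K] by blast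
  obtain Bb where Bb: "\<forall>x\<in>K. norm (b x) \<le> Bb" using dual_bounded_on_precompact[OF b K] by blast
  have "norm ((a - b) x) \<le> Ba + Bb" if "x \<in> K" for x
  proof -
    have "norm ((a - b) x) \<le> norm (a x) + norm (b x)" by (simp add: norm_triangle_ineq4)
    then show ?thesis using Ba Bb that by fastforce
  qed
  then show ?thesis by (intro bdd_aboveI) blast
qed

lemma qf_upper:
  assumes "a \<in> dual smul A p" "b \<in> dual smul A p" "precompact_lcs A p K" "z \<in> K"
  shows "norm ((a - b) z) \<le> qf K (a - b)"
  using cSup_upper[OF imageI[OF assms(4)] qf_bdd[OF assms(1-3)]] by simp

lemma qf_tri:
  assumes K: "K \<in> Kfam" and a: "a \<in> dual smul A p" and b: "b \<in> dual smul A p" and c: "c \<in> dual smul A p"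
  shows "qf K (a - c) \<le> qf K (a - b) + qf K (b - c)"
proof -
  have Kne: "K \<noteq> {}" and Kp: "precompact_lcs A p K" using K by auto
  have "Sup ((\<lambda>x. norm ((a - c) x)) ` K) \<le> qf K (a - b) + qf K (b - c)"
  proof (rule cSup_least)
    show "(\<lambda>x. norm ((a - c) x)) ` K \<noteq> {}" using Kne by simp
    fix y assume "y \<in> (\<lambda>x. norm ((a - c) x)) ` K"
    then obtain x where x: "x \<in> K" "y = norm ((a - c) x)" by blast
    have "(a - c) x = (a - b) x + (b - c) x" by simp
    then have "norm ((a - c) x) \<le> norm ((a - b) x) + norm ((b - c) x)" by (metis norm_triangle_ineq)
    also have "\<dots> \<le> qf K (a - b) + qf K (b - c)"
      using qf_upper[OF a b Kp x(1)] qf_upper[OF b c Kp x(1)] by simp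
    finally show "y \<le> qf K (a - b) + qf K (b - c)" using x(2) by simp
  qed
  then show ?thesis by simp
qed

lemma gamma_ball_open:
  assumes K: "K \<in> Kfam" and e0: "e0 \<in> dual smul A p"
  shows "openin (gamma_top smul A p) {y \<in> dual smul A p. qf K (y - e0) < r}"
  unfolding gamma_top_def
  by (rule seminorm_ball_open[where q = qf, OF _ K e0]) (use qf_tri[OF K] in auto)

lemma cont_gamma:
  assumes MS: "semi_Montel A p \<or> Schwartz A p"
  shows "continuous_map (gamma_top smul A p) Vtop R"
  unfolding FVtop_def
proof (rule continuous_map_into_seminorm_topology)
  show "R ` topspace (gamma_top smul A p) \<subseteq> V"
    unfolding gamma_top_def using R_prop by auto
  fix e0 i and \<epsilon> :: real
  assume e0: "e0 \<in> topspace (gamma_top smul A p)" and i: "i \<in> J \<times> L" and eps: "\<epsilon> > 0"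
  have e0d: "e0 \<in> dual smul A p" using e0 unfolding gamma_top_def by simp
  obtain j l where jl: "i = (j, l)" "j \<in> J" "l \<in> L" using i by blast
  obtain i' k C where ikC: "i' \<in> J" "k \<in> L" "C > 0"
    "\<And>g. g \<in> V \<Longrightarrow> sn j l g \<le> C * wsup {norm (T m g x) * \<nu> i' k m x | x m. x \<in> \<Omega> \<and> m \<in> M k \<and> (m, x) \<in> U}"
    using fixtop_est[OF jl(2,3)] by blast
  define K where "K = insert 0 (Nset i' k)"
  have Kp: "precompact_lcs A p K" unfolding K_def using bounded_precompact[OF MS Kset_bounded[OF ikC(1,2)]] .
  have KF: "K \<in> Kfam" using Kp unfolding K_def by simp
  define W where "W = {y \<in> dual smul A p. qf K (y - e0) < \<epsilon> / C}"
  have "openin (gamma_top smul A p) W" unfolding W_def using gamma_ball_open[OF KF e0d] .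
  moreover have "e0 \<in> W"
  proof -
    have "(\<lambda>x. norm ((e0 - e0) x)) ` K = {0}" using KF by auto
    then show ?thesis unfolding W_def using e0d eps ikC(3) by simp
  qed
  moreover have "\<forall>e\<in>W. (\<lambda>(j, l). sn j l) i (R e - R e0) < \<epsilon>"
  proof
    fix e assume eW: "e \<in> W"
    then have ed: "e \<in> dual smul A p" and lt: "qf K (e - e0) < \<epsilon> / C" unfolding W_def by auto
    have "sn j l (R e - R e0) \<le> C * qf K (e - e0)"
    proof (rule key_est[OF ed e0d ikC(1-3) ikC(4)])
      show "0 \<le> qf K (e - e0)"
        using qf_upper[OF ed e0d Kp, of 0] dual_zero[OF ed] dual_zero[OF e0d] unfolding K_def by simp
      fix z assume "z \<in> Nset i' k"
      then have "z \<in> K" unfolding K_def by simp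
      then show "norm (e z - e0 z) \<le> qf K (e - e0)" using qf_upper[OF ed e0d Kp] by simp
    qed
    also have "\<dots> < C * (\<epsilon> / C)" using mult_strict_left_mono[OF lt ikC(3)] .
    also have "\<dots> = \<epsilon>" using ikC(3) by simp
    finally show "(\<lambda>(j, l). sn j l) i (R e - R e0) < \<epsilon>" using jl(1) by simp
  qed
  ultimately show "\<exists>W. openin (gamma_top smul A p) W \<and> e0 \<in> W \<and> (\<forall>x\<in>W. (\<lambda>(j, l). sn j l) i (R x - R e0) < \<epsilon>)"
    by blast
qed

end


context P44 begin

lemma cont_polar:
  assumes MS: "semi_Montel A p \<or> Schwartz A p" and \<alpha>: "\<alpha> \<in> A"
  shows "continuous_map (subtopology (product_topology (\<lambda>_::'e. (euclidean::'k topology)) UNIV) (polar_ball smul A p \<alpha>)) Vtop R"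
  unfolding FVtop_def
proof (rule continuous_map_into_seminorm_topology)
  let ?P = "product_topology (\<lambda>_::'e. (euclidean::'k topology)) UNIV"
  let ?B = "polar_ball smul A p \<alpha>"
  have tsP: "topspace ?P = UNIV" by simp
  have Bd: "?B \<subseteq> dual smul A p" unfolding polar_ball_def by blast
  show "R ` topspace (subtopology ?P ?B) \<subseteq> V" using R_prop Bd by auto
  fix e0 i and \<epsilon> :: real
  assume e0: "e0 \<in> topspace (subtopology ?P ?B)" and i: "i \<in> J \<times> L" and eps: "\<epsilon> > 0"
  have e0B: "e0 \<in> ?B" using e0 by simp
  have e0d: "e0 \<in> dual smul A p" using e0B Bd by blast
  obtain j l where jl: "i = (j, l)" "j \<in> J" "l \<in> L" using i by blast
  obtain i' k C where ikC: "i' \<in> J" "k \<in> L" "C > 0"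
    "\<And>g. g \<in> V \<Longrightarrow> sn j l g \<le> C * wsup {norm (T m g x) * \<nu> i' k m x | x m. x \<in> \<Omega> \<and> m \<in> M k \<and> (m, x) \<in> U}"
    using fixtop_est[OF jl(2,3)] by blast
  have "precompact_lcs A p (Nset i' k)" using bounded_precompact[OF MS Nset_bounded[OF ikC(1,2)]] .
  then have pc: "precompact_wrt (p \<alpha>) (Nset i' k)" using \<alpha> unfolding precompact_lcs_def by blast
  define \<delta> where "\<delta> = \<epsilon> / (4 * C)"
  have dpos: "\<delta> > 0" unfolding \<delta>_def using eps ikC(3) by simp
  obtain F where F: "finite F" "Nset i' k \<subseteq> (\<Union>y\<in>F. {x. p \<alpha> (x - y) < \<delta>})"
    using pc dpos unfolding precompact_wrt_def by blast
  define S where "S y = {g \<in> topspace ?P. g y \<in> ball (e0 y) \<delta>}" for y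
  have So: "openin ?P (S y)" for y
    unfolding S_def by (rule openin_continuous_map_preimage[OF proj_cont]) simp
  define W0 where "W0 = topspace ?P \<inter> \<Inter>(S ` F)"
  have W0o: "openin ?P W0" unfolding W0_def using F(1) So by (rule openin_finite_Inter_top)
  define W where "W = ?B \<inter> W0"
  have "openin (subtopology ?P ?B) W" unfolding W_def using W0o by (rule openin_subtopology_Int2)
  moreover have "e0 \<in> W" unfolding W_def W0_def S_def using e0B dpos by simp
  moreover have "\<forall>e\<in>W. (\<lambda>(j, l). sn j l) i (R e - R e0) < \<epsilon>"
  proof
    fix e assume eW: "e \<in> W"
    then have eB: "e \<in> ?B" and eW0: "e \<in> W0" unfolding W_def by auto
    have ed: "e \<in> dual smul A p" using eB Bd by blast
    have close: "norm (e y - e0 y) < \<delta>" if y: "y \<in> F" for y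
    proof -
      have "e \<in> S y" using eW0 y unfolding W0_def by blast
      then have "dist (e0 y) (e y) < \<delta>" unfolding S_def by simp
      then show ?thesis by (simp add: dist_norm norm_minus_commute)
    qed
    have "sn j l (R e - R e0) \<le> C * (3 * \<delta>)"
    proof (rule key_est[OF ed e0d ikC(1-3) ikC(4)])
      show "0 \<le> 3 * \<delta>" using dpos by simp
      fix z assume z: "z \<in> Nset i' k"
      then have "z \<in> (\<Union>y\<in>F. {x. p \<alpha> (x - y) < \<delta>})" using F(2) by (rule subsetD[rotated])
      then obtain y where y: "y \<in> F" "p \<alpha> (z - y) < \<delta>" by blast
      have "e z - e0 z = (e y - e0 y) + (e (z - y) - e0 (z - y))"
        using dual_diff[OF ed] dual_diff[OF e0d] by simp
      then have n1: "norm (e z - e0 z) \<le> norm (e y - e0 y) + norm (e (z - y) - e0 (z - y))"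
        by (simp only: norm_triangle_ineq)
      have n2: "norm (e (z - y) - e0 (z - y)) \<le> norm (e (z - y)) + norm (e0 (z - y))"
        by (rule norm_triangle_ineq4)
      have "norm (e z - e0 z) \<le> norm (e y - e0 y) + (norm (e (z - y)) + norm (e0 (z - y)))"
        using n1 n2 by linarith
      also have "\<dots> \<le> \<delta> + (p \<alpha> (z - y) + p \<alpha> (z - y))"
        using close[OF y(1)] dual_norm_le[OF eB \<alpha>] dual_norm_le[OF e0B \<alpha>]
        by (intro add_mono) auto
      also have "\<dots> \<le> 3 * \<delta>" using y(2) by simp
      finally show "norm (e z - e0 z) \<le> 3 * \<delta>" .
    qed
    also have "C * (3 * \<delta>) < \<epsilon>" unfolding \<delta>_def using ikC(3) eps by simp
    finally show "(\<lambda>(j, l). sn j l) i (R e - R e0) < \<epsilon>" using jl(1) by simp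
  qed
  ultimately show "\<exists>W. openin (subtopology ?P ?B) W \<and> e0 \<in> W \<and> (\<forall>x\<in>W. (\<lambda>(j, l). sn j l) i (R x - R e0) < \<epsilon>)"
    by blast
qed

lemma relcomp_polar:
  assumes ne: "\<exists>x::'e. x \<noteq> 0" and MS: "semi_Montel A p \<or> Schwartz A p" and \<alpha>: "\<alpha> \<in> A"
  shows "relatively_compact Vtop (R ` polar_ball smul A p \<alpha>)"
proof -
  let ?P = "product_topology (\<lambda>_::'e. (euclidean::'k topology)) UNIV"
  let ?B = "polar_ball smul A p \<alpha>"
  have "compactin (subtopology ?P ?B) ?B"
    unfolding compactin_subtopology using polar_compact[OF ne MS \<alpha>] by simp
  then have c: "compactin Vtop (R ` ?B)" using cont_polar[OF MS \<alpha>] by (rule image_compactin)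
  then have "closedin Vtop (R ` ?B)" using Hausdorff_Vtop by (intro compactin_imp_closedin)
  then have "Vtop closure_of (R ` ?B) = R ` ?B" by (rule closure_of_closedin)
  then show ?thesis unfolding relatively_compact_def using c by simp
qed

end


theorem proposition4p4:
  fixes smul :: "'k::real_normed_field \<Rightarrow> 'e::ab_group_add \<Rightarrow> 'e"
    and A :: "'a set" and p :: "'a \<Rightarrow> 'e \<Rightarrow> real"
    and \<Omega> :: "'x set" and J :: "'j set" and L :: "'l set" and M :: "'l \<Rightarrow> 'm set"
    and \<nu> :: "'j \<Rightarrow> 'l \<Rightarrow> 'm \<Rightarrow> 'x \<Rightarrow> real" and M0 Mr :: "'m set" and \<omega> :: "'m \<Rightarrow> 'x set"
    and domT :: "'m \<Rightarrow> ('x \<Rightarrow> 'k) set" and T :: "'m \<Rightarrow> ('x \<Rightarrow> 'k) \<Rightarrow> 'x \<Rightarrow> 'k"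
    and U :: "('m \<times> 'x) set" and f :: "'m \<times> 'x \<Rightarrow> 'e"
  assumes "vector_space smul"
    and "\<exists>x::'e. x \<noteq> 0"
    and "lcs_seminorms smul A p"
    and "semi_Montel A p \<or> Schwartz A p"
    and "FV_data \<Omega> J L M \<nu> M0 Mr \<omega> domT T"
    and "dom_space \<Omega> J L M \<nu> M0 Mr \<omega> domT T"
    and "fixes_topology \<Omega> J L M \<nu> M0 Mr \<omega> domT T U"
    and "f \<in> FVE_lb smul A p \<Omega> J L M \<nu> M0 Mr \<omega> domT T U"
  shows "(\<forall>e1\<in>dual smul A p. \<forall>e2\<in>dual smul A p.
            Rmap \<Omega> J L M \<nu> M0 Mr \<omega> domT T U f (\<lambda>x. e1 x + e2 x)
            = (\<lambda>y. Rmap \<Omega> J L M \<nu> M0 Mr \<omega> domT T U f e1 y + Rmap \<Omega> J L M \<nu> M0 Mr \<omega> domT T U f e2 y))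
       \<and> (\<forall>c. \<forall>e\<in>dual smul A p.
            Rmap \<Omega> J L M \<nu> M0 Mr \<omega> domT T U f (\<lambda>x. c * e x)
            = (\<lambda>y. c * Rmap \<Omega> J L M \<nu> M0 Mr \<omega> domT T U f e y))
       \<and> continuous_map (gamma_top smul A p) (FVtop \<Omega> J L M \<nu> M0 Mr \<omega> domT T)
            (Rmap \<Omega> J L M \<nu> M0 Mr \<omega> domT T U f)
       \<and> (\<forall>\<alpha>\<in>A. relatively_compact (FVtop \<Omega> J L M \<nu> M0 Mr \<omega> domT T)
            (Rmap \<Omega> J L M \<nu> M0 Mr \<omega> domT T U f ` polar_ball smul A p \<alpha>))"
proof -
  have P: "P44 smul A p \<Omega> J L M \<nu> M0 Mr \<omega> domT T U f"
    unfolding P44_def P44_axioms_def lcsE_def lcsE_axioms_def using assms by blast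
  interpret P44 smul A p \<Omega> J L M \<nu> M0 Mr \<omega> domT T U f by (rule P)
  show ?thesis
  proof (intro conjI ballI allI)
    fix e1 e2 assume "e1 \<in> dual smul A p" "e2 \<in> dual smul A p"
    then show "Rmap \<Omega> J L M \<nu> M0 Mr \<omega> domT T U f (\<lambda>x. e1 x + e2 x)
            = (\<lambda>y. Rmap \<Omega> J L M \<nu> M0 Mr \<omega> domT T U f e1 y + Rmap \<Omega> J L M \<nu> M0 Mr \<omega> domT T U f e2 y)"
      by (rule R_add)
  next
    fix c e assume "e \<in> dual smul A p"
    then show "Rmap \<Omega> J L M \<nu> M0 Mr \<omega> domT T U f (\<lambda>x. c * e x)
            = (\<lambda>y. c * Rmap \<Omega> J L M \<nu> M0 Mr \<omega> domT T U f e y)"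
      by (rule R_scale)
  next
    show "continuous_map (gamma_top smul A p) (FVtop \<Omega> J L M \<nu> M0 Mr \<omega> domT T)
            (Rmap \<Omega> J L M \<nu> M0 Mr \<omega> domT T U f)"
      using assms(4) by (rule cont_gamma)
  next
    fix \<alpha> assume "\<alpha> \<in> A"
    then show "relatively_compact (FVtop \<Omega> J L M \<nu> M0 Mr \<omega> domT T)
            (Rmap \<Omega> J L M \<nu> M0 Mr \<omega> domT T U f ` polar_ball smul A p \<alpha>)"
      using assms(2) assms(4) by (intro relcomp_polar)
  qed
qed

end
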